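(* Suppose Assumptions 1, 2 and 3 hold and $\delta_{2r}=c_0/\sqrt r$ for a sufficiently small constant $c_0$. Let $U^{(\lambda)}$ be a point satisfying the first- and second-order necessary conditions for a local minimum of $f^{(\lambda)}$. Then on the event $\mathcal{E}_{\mathsf{Good}}$, \[ \frac{1}{\sqrt{dr}}\|U^{(\lambda)}U^{(\lambda)\top}-M\|_F\le C\sigma \] for a constant $C$ depending on the assumptions. In particular, $\|U^{(\lambda)}U^{(\lambda)\top}-M\|_F<\lambda/(2\delta_{2r})$.
   Context: Setting. Let $d,n,r$ be positive integers and $\sigma>0$. $\mathsf{GOE}(d)$ denotes the law of a symmetric $d\times d$ matrix whose diagonal entries are i.i.d. $N(0,1)$ and whose entries above the diagonal are i.i.d. $N(0,1/2)$, independent of the diagonal. One observes $(y_i,X_i)$, $i=1,\dots,n$, with $y_i=n^{-1/2}\langle X_i,M\rangle+\varepsilon_i$, where $\langle\cdot,\cdot\rangle$ is the Frobenius inner product, $X_i\sim\mathsf{GOE}(d)$, $\varepsilon_i\sim N(0,\sigma^2)$, all mutually independent, and $M$ is a symmetric positive semidefinite matrix of rank $r$. Define $\mathcal{X}(A)_i=n^{-1/2}\langle X_i,A\rangle$. For $U\in\mathbb{R}^{d\times r}$, $f^{(\lambda)}(U)=\frac14\sum_{i=1}^n(y_i-n^{-1/2}\langle X_i,UU^\top\rangle)^2+\frac{\lambda}{2}\|U\|_F^2$. Assumption 1: $M=\sqrt d\,V\Lambda V^\top$ with $V\in\mathbb{R}^{d\times r}$ having orthonormal columns and $\Lambda$ an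 $r\times r$ positive diagonal matrix whose smallest entry $\lambda_r$ satisfies $C_1\sqrt r<\lambda_r/\sigma<C_2\sqrt r$ for sufficiently large constants $C_1,C_2$; moreover $\|M\|/(\lambda_r\sqrt d)\le\kappa$ with $\kappa=O(1)$, and $\sigma\ge\sigma_{\min}>c>0$. Assumption 2: $\gamma_n:=n/(dr)$ satisfies $\gamma_n\ge C_3 r$ for a sufficiently large constant $C_3$. Assumption 3: $C_4\sqrt d\le\lambda/\sigma\le C_5\sqrt d$ for constants $C_4,C_5$. For a fixed constant $\delta_{2r}>0$, $\mathcal{E}_{\mathsf{Good}}$ is the intersection of the events: (i) $\|\frac1n\sum_i\varepsilon_iX_i\|\le 8\sigma\sqrt{d/n}$ (spectral norm); (ii) $(1-\delta_{2r})\|A\|_F^2\le\|\mathcal{X}(A)\|^2\le(1+\delta_{2r})\|A\|_F^2$ for all symmetric $A$ of rank at most $2r$; (iii) $|\frac1n\sum_i\varepsilon_i\langle X_i,A\rangle|\le C\sigma\sqrt{dr/n}\,\|A\|_F$ for all symmetric $A$ of rank at most $2r$. *)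

theory Defs
  imports Complex_Main "Jordan_Normal_Form.DL_Rank"
begin

definition frob_inner :: "real mat \<Rightarrow> real mat \<Rightarrow> real" where
  "frob_inner A B = (\<Sum>i<dim_row A. \<Sum>j<dim_col A. A $$ (i,j) * B $$ (i,j))"

definition frob_norm :: "real mat \<Rightarrow> real" where
  "frob_norm A = sqrt (frob_inner A A)"

definition vnorm :: "real vec \<Rightarrow> real" where
  "vnorm v = sqrt (v \<bullet> v)"

definition spec_norm :: "real mat \<Rightarrow> real" where
  "spec_norm A = Sup {vnorm (A *\<^sub>v v) | v. v \<in> carrier_vec (dim_col A) \<and> vnorm v = 1}"

definition symmetric_mat :: "real mat \<Rightarrow> bool" where
  "symmetric_mat A \<longleftrightarrow> dim_row A = dim_col A \<and> transpose_mat A = A"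

definition mat_rank :: "real mat \<Rightarrow> nat" where
  "mat_rank A = vec_space.rank (dim_row A) A"

definition meas :: "nat \<Rightarrow> (nat \<Rightarrow> real mat) \<Rightarrow> real mat \<Rightarrow> nat \<Rightarrow> real" where
  "meas n X A i = frob_inner (X i) A / sqrt (real n)"

definition meas_sqnorm :: "nat \<Rightarrow> (nat \<Rightarrow> real mat) \<Rightarrow> real mat \<Rightarrow> real" where
  "meas_sqnorm n X A = (\<Sum>i<n. (meas n X A i)\<^sup>2)"

definition obs :: "nat \<Rightarrow> (nat \<Rightarrow> real mat) \<Rightarrow> (nat \<Rightarrow> real) \<Rightarrow> real mat \<Rightarrow> nat \<Rightarrow> real" where
  "obs n X eps M i = meas n X M i + eps i"

definition f_obj :: "nat \<Rightarrow> (nat \<Rightarrow> real mat) \<Rightarrow> (nat \<Rightarrow> real) \<Rightarrow> real mat \<Rightarrow> real \<Rightarrow> real mat \<Rightarrow> real" where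
  "f_obj n X eps M lam U =
     (1/4) * (\<Sum>i<n. (obs n X eps M i - meas n X (U * transpose_mat U) i)\<^sup>2)
     + (lam / 2) * (frob_norm U)\<^sup>2"

(* First- and second-order necessary conditions for a local minimum of F at U, over d x r
   matrices: every directional derivative vanishes (gradient zero) and every second
   directional derivative is nonnegative (Hessian PSD). *)
definition second_order_stationary :: "(real mat \<Rightarrow> real) \<Rightarrow> nat \<Rightarrow> nat \<Rightarrow> real mat \<Rightarrow> bool" where
  "second_order_stationary F d r U \<longleftrightarrow> U \<in> carrier_mat d r \<and>
     (\<forall>H \<in> carrier_mat d r. \<exists>g'.
        (\<forall>t. ((\<lambda>s. F (U + s \<cdot>\<^sub>m H)) has_real_derivative g' t) (at t)) \<and>
        g' 0 = 0 \<and>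
        (\<exists>D. (g' has_real_derivative D) (at 0) \<and> D \<ge> 0))"

definition good_event :: "nat \<Rightarrow> nat \<Rightarrow> nat \<Rightarrow> real \<Rightarrow> real \<Rightarrow> real \<Rightarrow>
    (nat \<Rightarrow> real mat) \<Rightarrow> (nat \<Rightarrow> real) \<Rightarrow> bool" where
  "good_event d n r sigma delta Cev X eps \<longleftrightarrow>
     spec_norm (mat d d (\<lambda>(j,k). (1 / real n) * (\<Sum>i<n. eps i * X i $$ (j,k))))
        \<le> 8 * sigma * sqrt (real d / real n) \<and>
     (\<forall>A \<in> carrier_mat d d. symmetric_mat A \<and> mat_rank A \<le> 2 * r \<longrightarrow>
        (1 - delta) * (frob_norm A)\<^sup>2 \<le> meas_sqnorm n X A \<and>
        meas_sqnorm n X A \<le> (1 + delta) * (frob_norm A)\<^sup>2) \<and>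
     (\<forall>A \<in> carrier_mat d d. symmetric_mat A \<and> mat_rank A \<le> 2 * r \<longrightarrow>
        \<bar>(1 / real n) * (\<Sum>i<n. eps i * frob_inner (X i) A)\<bar>
          \<le> Cev * sigma * sqrt (real d * real r / real n) * frob_norm A)"

end

theory Submission
  imports Defs "HOL-Analysis.Function_Topology"
begin

lemma mult_entry:
  "A \<in> carrier_mat n k \<Longrightarrow> B \<in> carrier_mat k m \<Longrightarrow> i < n \<Longrightarrow> j < m \<Longrightarrow>
   (A * B) $$ (i,j) = (\<Sum>l<k. A $$ (i,l) * B $$ (l,j))"
  by (simp add: scalar_prod_def atLeast0LessThan)

lemma frob_inner_carrier:
  "A \<in> carrier_mat m k \<Longrightarrow> frob_inner A B = (\<Sum>i<m. \<Sum>j<k. A $$ (i,j) * B $$ (i,j))"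
  by (simp add: frob_inner_def)

lemma frob_inner_nonneg: "frob_inner A A \<ge> 0"
  unfolding frob_inner_def by (intro sum_nonneg) auto

lemma frob_norm_sq: "(frob_norm A)^2 = frob_inner A A"
  unfolding frob_norm_def using frob_inner_nonneg by simp

lemma frob_lin:
  assumes "A \<in> carrier_mat m k"
    and "\<And>i j. i < m \<Longrightarrow> j < k \<Longrightarrow> Z $$ (i,j) = a * Z1 $$ (i,j) + b * Z2 $$ (i,j) + c * Z3 $$ (i,j)"
  shows "frob_inner A Z = a * frob_inner A Z1 + b * frob_inner A Z2 + c * frob_inner A Z3"
proof -
  have "frob_inner A Z = (\<Sum>i<m. \<Sum>j<k. a * (A $$ (i,j) * Z1 $$ (i,j)) + b * (A $$ (i,j) * Z2 $$ (i,j))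
          + c * (A $$ (i,j) * Z3 $$ (i,j)))"
    unfolding frob_inner_carrier[OF assms(1)]
    by (intro sum.cong refl) (simp add: assms(2) algebra_simps)
  also have "\<dots> = a * frob_inner A Z1 + b * frob_inner A Z2 + c * frob_inner A Z3"
    unfolding frob_inner_carrier[OF assms(1)]
    by (simp add: sum.distrib sum_distrib_left)
  finally show ?thesis .
qed

lemma compact_box: "compact (PiE UNIV (\<lambda>_::nat\<times>nat. {-c..c::real}))"
proof -
  have "compactin (product_topology (\<lambda>_. euclidean) UNIV) (PiE UNIV (\<lambda>_::nat\<times>nat. {-c..c::real}))"
    by (subst compactin_PiE) auto
  then show ?thesis by (simp add: euclidean_product_topology)
qed

lemma gram_entry:
  "A \<in> carrier_mat d r \<Longrightarrow> B \<in> carrier_mat d r \<Longrightarrow> i < d \<Longrightarrow> j < d \<Longrightarrow>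
   (A * transpose_mat B) $$ (i,j) = (\<Sum>k<r. A $$ (i,k) * B $$ (j,k))"
  by (subst mult_entry[of _ d r _ d]) auto

lemma fo_so:
  fixes U H :: "real mat"
  assumes sos: "second_order_stationary (f_obj n X eps M lam) d r U"
    and H: "H \<in> carrier_mat d r"
    and Xc: "\<forall>i<n. X i \<in> carrier_mat d d"
  shows "(\<Sum>i<n. (obs n X eps M i - meas n X (U * transpose_mat U) i) * meas n X (U * transpose_mat H + H * transpose_mat U) i)
           = 2 * lam * frob_inner U H"
    and "(\<Sum>i<n. (meas n X (U * transpose_mat H + H * transpose_mat U) i)^2)
          - 2 * (\<Sum>i<n. (obs n X eps M i - meas n X (U * transpose_mat U) i) * meas n X (H * transpose_mat H) i)
          + 2 * lam * frob_inner H H \<ge> 0"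
proof -
  have U: "U \<in> carrier_mat d r" using sos unfolding second_order_stationary_def by auto
  obtain g' where g'1: "\<And>t. ((\<lambda>s. f_obj n X eps M lam (U + s \<cdot>\<^sub>m H)) has_real_derivative g' t) (at t)"
    and g'0: "g' 0 = 0" and D: "\<exists>D. (g' has_real_derivative D) (at 0) \<and> D \<ge> 0"
    using sos H unfolding second_order_stationary_def by blast
  define o' where "o' i = obs n X eps M i" for i
  define al where "al i = meas n X (U * transpose_mat U) i" for i
  define be where "be i = meas n X (U * transpose_mat H + H * transpose_mat U) i" for i
  define ga where "ga i = meas n X (H * transpose_mat H) i" for i
  define aa where "aa = frob_inner U U"
  define bb where "bb = frob_inner U H"
  define cc where "cc = frob_inner H H"
  define phi where "phi s = (1/4) * (\<Sum>i<n. (o' i - (al i + s * be i + s^2 * ga i))^2) + lam/2 * (aa + 2 * s * bb + s^2 * cc)" for s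
  define phi1 where "phi1 s = (1/4) * (\<Sum>i<n. 2 * (o' i - (al i + s * be i + s^2 * ga i)) * (- (be i + 2 * s * ga i)))
      + lam/2 * (2 * bb + 2 * s * cc)" for s
  have meas_exp: "meas n X ((U + s \<cdot>\<^sub>m H) * transpose_mat (U + s \<cdot>\<^sub>m H)) i = al i + s * be i + s^2 * ga i"
    if "i < n" for s i
  proof -
    have Xi: "X i \<in> carrier_mat d d" using Xc that by auto
    have "frob_inner (X i) ((U + s \<cdot>\<^sub>m H) * transpose_mat (U + s \<cdot>\<^sub>m H))
      = 1 * frob_inner (X i) (U * transpose_mat U) + s * frob_inner (X i) (U * transpose_mat H + H * transpose_mat U)
        + s^2 * frob_inner (X i) (H * transpose_mat H)"
    proof (rule frob_lin[OF Xi])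
      fix j l assume jl: "j < d" "l < d"
      have UsH: "U + s \<cdot>\<^sub>m H \<in> carrier_mat d r" using U H by auto
      show "((U + s \<cdot>\<^sub>m H) * transpose_mat (U + s \<cdot>\<^sub>m H)) $$ (j, l) =
         1 * (U * transpose_mat U) $$ (j, l) + s * (U * transpose_mat H + H * transpose_mat U) $$ (j, l) +
         s\<^sup>2 * (H * transpose_mat H) $$ (j, l)"
        using U H jl
        by (simp add: gram_entry[OF UsH UsH jl] gram_entry[OF U U jl] gram_entry[OF U H jl] gram_entry[OF H U jl]
            gram_entry[OF H H jl] sum.distrib sum_distrib_left algebra_simps power2_eq_square)
    qed
    then show ?thesis unfolding meas_def al_def be_def ga_def by (simp add: add_divide_distrib)
  qed
  have norm_exp: "(frob_norm (U + s \<cdot>\<^sub>m H))^2 = aa + 2 * s * bb + s^2 * cc" for s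
  proof -
    have UsH: "U + s \<cdot>\<^sub>m H \<in> carrier_mat d r" using U H by auto
    have "frob_inner (U + s \<cdot>\<^sub>m H) (U + s \<cdot>\<^sub>m H) = (\<Sum>i<d. \<Sum>j<r. U $$ (i,j) * U $$ (i,j) + 2 * s * (U $$ (i,j) * H $$ (i,j))
       + s^2 * (H $$ (i,j) * H $$ (i,j)))"
      unfolding frob_inner_carrier[OF UsH] using U H
      by (intro sum.cong refl) (auto simp: algebra_simps power2_eq_square)
    also have "\<dots> = aa + 2 * s * bb + s^2 * cc"
      unfolding aa_def bb_def cc_def frob_inner_carrier[OF U] frob_inner_carrier[OF H]
      by (simp add: sum.distrib sum_distrib_left)
    finally show ?thesis by (simp add: frob_norm_sq)
  qed
  have phi_eq: "(\<lambda>s. f_obj n X eps M lam (U + s \<cdot>\<^sub>m H)) = phi"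
  proof (rule ext)
    fix s
    have "(\<Sum>i<n. (obs n X eps M i - meas n X ((U + s \<cdot>\<^sub>m H) * transpose_mat (U + s \<cdot>\<^sub>m H)) i)^2)
        = (\<Sum>i<n. (o' i - (al i + s * be i + s^2 * ga i))^2)"
      by (rule sum.cong) (auto simp: meas_exp o'_def)
    then show "f_obj n X eps M lam (U + s \<cdot>\<^sub>m H) = phi s"
      by (simp add: f_obj_def phi_def norm_exp)
  qed
  have dphi: "(phi has_real_derivative phi1 t) (at t)" for t
    unfolding phi_def phi1_def
    apply (rule derivative_eq_intros refl | simp)+
    by (simp add: algebra_simps)
  have g'eq: "g' = phi1"
  proof
    fix t show "g' t = phi1 t" using DERIV_unique[OF g'1[of t, unfolded phi_eq] dphi] .
  qed
  define phi2 where "phi2 = (1/4) * (\<Sum>i<n. 2 * (be i)^2 - 4 * (o' i - al i) * ga i) + lam * cc"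
  have dphi1: "(phi1 has_real_derivative phi2) (at 0)"
  proof -
    have "(phi1 has_real_derivative (1/4) * (\<Sum>i<n. 2 * (- (be i + 2 * 0 * ga i)) * (- (be i + 2 * 0 * ga i))
       + 2 * (o' i - (al i + 0 * be i + 0^2 * ga i)) * (- (2 * ga i))) + lam/2 * (2*cc)) (at 0)"
      unfolding phi1_def
      apply (rule derivative_eq_intros refl | simp)+
      by (simp add: algebra_simps)
    then show ?thesis unfolding phi2_def
      by (simp add: power2_eq_square algebra_simps sum_subtractf sum_distrib_left)
  qed
  obtain D where D1: "(g' has_real_derivative D) (at 0)" and D2: "D \<ge> 0" using D by blast
  have "D = phi2" using DERIV_unique[OF D1[unfolded g'eq] dphi1] .
  with D2 have "phi2 \<ge> 0" by simp
  moreover have "phi1 0 = 0" using g'0 g'eq by simp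
  moreover have "phi1 0 = (1/4) * (\<Sum>i<n. (-2) * ((o' i - al i) * be i)) + lam * bb"
    unfolding phi1_def by (simp add: algebra_simps)
  moreover have "(\<Sum>i<n. (-2) * ((o' i - al i) * be i)) = (-2) * (\<Sum>i<n. (o' i - al i) * be i)"
    by (simp only: sum_distrib_left[symmetric])
  moreover have "(\<Sum>i<n. 2 * (be i)^2 - 4 * (o' i - al i) * ga i) = 2 * (\<Sum>i<n. (be i)^2) - 4 * (\<Sum>i<n. (o' i - al i) * ga i)"
    by (simp add: sum_subtractf sum_distrib_left algebra_simps)
  ultimately show "(\<Sum>i<n. (obs n X eps M i - meas n X (U * transpose_mat U) i) * meas n X (U * transpose_mat H + H * transpose_mat U) i)
           = 2 * lam * frob_inner U H"
    and "(\<Sum>i<n. (meas n X (U * transpose_mat H + H * transpose_mat U) i)^2)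
          - 2 * (\<Sum>i<n. (obs n X eps M i - meas n X (U * transpose_mat U) i) * meas n X (H * transpose_mat H) i)
          + 2 * lam * frob_inner H H \<ge> 0"
    unfolding phi2_def o'_def[symmetric] al_def[symmetric] be_def[symmetric] ga_def[symmetric] bb_def[symmetric] cc_def[symmetric]
    by linarith+
qed

lemma rank_outer_sum:
  fixes f g :: "nat \<Rightarrow> nat \<Rightarrow> real"
  shows "vec_space.rank n (mat n n (\<lambda>(i,j). \<Sum>k<m. f k i * g k j)) \<le> m"
proof (induction m)
  case 0
  have eq0: "mat n n (\<lambda>(i,j). \<Sum>k<0. f k i * g k j) = (0\<^sub>m n n :: real mat)"
    by (rule eq_matI) auto
  show ?case unfolding eq0 using vec_space.rank_0I[of n n] by simp
next
  case (Suc m)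
  have eq: "mat n n (\<lambda>(i,j). \<Sum>k<Suc m. f k i * g k j)
    = mat n n (\<lambda>(i,j). \<Sum>k<m. f k i * g k j) + mat n n (\<lambda>(i,j). f m i * g m j)"
    by (rule eq_matI) auto
  have "vec_space.rank n (mat n n (\<lambda>(i,j). \<Sum>k<Suc m. f k i * g k j))
     \<le> vec_space.rank n (mat n n (\<lambda>(i,j). \<Sum>k<m. f k i * g k j)) + vec_space.rank n (mat n n (\<lambda>(i,j). f m i * g m j))"
    unfolding eq by (rule vec_space.rank_subadditive) auto
  moreover have "vec_space.rank n (mat n n (\<lambda>(i,j). f m i * g m j)) \<le> 1"
    by (rule vec_space.rank_le_1_product_entries[of _ n n "f m" "g m"]) auto
  ultimately show ?case using Suc.IH by simp
qed

lemma entry_bound: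
  fixes Y M :: "real mat"
  assumes Y: "Y \<in> carrier_mat d r" and YM: "Y * transpose_mat Y = M" and i: "i < d" and k: "k < r"
  shows "\<bar>Y $$ (i,k)\<bar> \<le> 1 + (\<Sum>j<d. \<bar>M $$ (j,j)\<bar>)"
proof -
  have "M $$ (i,i) = (\<Sum>t<r. Y $$ (i,t) * Y $$ (i,t))" using gram_entry[OF Y Y i i] YM by simp
  also have "\<dots> \<ge> Y $$ (i,k) * Y $$ (i,k)"
    by (rule member_le_sum) (use k in auto)
  finally have 1: "(Y $$ (i,k))^2 \<le> M $$ (i,i)" by (simp add: power2_eq_square)
  have 2: "M $$ (i,i) \<le> (\<Sum>j<d. \<bar>M $$ (j,j)\<bar>)"
    using member_le_sum[of i "{..<d}" "\<lambda>j. \<bar>M $$ (j,j)\<bar>"] i by auto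
  have 3: "\<bar>Y $$ (i,k)\<bar> \<le> 1 + (Y $$ (i,k))^2"
  proof (cases "\<bar>Y $$ (i,k)\<bar> \<le> 1")
    case True then show ?thesis by (simp add: add_increasing2)
  next
    case False
    then have "\<bar>Y $$ (i,k)\<bar> * 1 \<le> \<bar>Y $$ (i,k)\<bar> * \<bar>Y $$ (i,k)\<bar>" by (intro mult_left_mono) auto
    then show ?thesis by (simp add: power2_eq_square abs_mult_self_eq)
  qed
  show ?thesis using 1 2 3 by linarith
qed

lemma exists_max:
  fixes U Y0 M :: "real mat"
  assumes U: "U \<in> carrier_mat d r" and Y0: "Y0 \<in> carrier_mat d r" and Y0M: "Y0 * transpose_mat Y0 = M"
  shows "\<exists>Y \<in> carrier_mat d r. Y * transpose_mat Y = M \<and>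
     (\<forall>Y' \<in> carrier_mat d r. Y' * transpose_mat Y' = M \<longrightarrow> frob_inner U Y' \<le> frob_inner U Y)"
proof -
  define cb where "cb = 1 + (\<Sum>j<d. \<bar>M $$ (j,j)\<bar>)"
  define tofun where "tofun Y = (\<lambda>(i,k). if i < d \<and> k < r then Y $$ (i,k) else 0 :: real)" for Y :: "real mat"
  define S where "S = PiE UNIV (\<lambda>_::nat\<times>nat. {-cb..cb}) \<inter>
      {f. \<forall>i. \<forall>j. i < d \<longrightarrow> j < d \<longrightarrow> (\<Sum>k<r. f (i,k) * f (j,k)) = M $$ (i,j)}"
  define obj where "obj f = (\<Sum>i<d. \<Sum>k<r. U $$ (i,k) * f (i,k))" for f :: "nat \<times> nat \<Rightarrow> real"
  have cbpos: "cb \<ge> 0" unfolding cb_def by (simp add: sum_nonneg)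
  have closed: "closed {f :: nat\<times>nat \<Rightarrow> real. \<forall>i. \<forall>j. i < d \<longrightarrow> j < d \<longrightarrow> (\<Sum>k<r. f (i,k) * f (j,k)) = M $$ (i,j)}"
  proof (intro closed_Collect_all closed_Collect_imp open_Collect_const)
    fix i j
    show "closed {f :: nat\<times>nat \<Rightarrow> real. (\<Sum>k<r. f (i,k) * f (j,k)) = M $$ (i,j)}"
      by (intro closed_Collect_eq continuous_on_sum continuous_on_mult continuous_on_product_coordinates continuous_on_const)
  qed
  have compS: "compact S" unfolding S_def by (intro compact_Int_closed compact_box closed)
  have inS: "tofun Y' \<in> S" if Y': "Y' \<in> carrier_mat d r" "Y' * transpose_mat Y' = M" for Y'
  proof -
    have eb: "\<bar>Y' $$ (i,k)\<bar> \<le> cb" if "i < d" "k < r" for i k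
      using entry_bound[OF Y'(1) Y'(2) that] unfolding cb_def .
    have "tofun Y' (i,k) \<in> {-cb..cb}" for i k
      using eb[of i k] cbpos unfolding tofun_def
      by (auto simp: abs_le_iff)
    moreover have "(\<Sum>k<r. tofun Y' (i,k) * tofun Y' (j,k)) = M $$ (i,j)" if "i < d" "j < d" for i j
      using gram_entry[OF Y'(1) Y'(1) that] Y'(2) that unfolding tofun_def by auto
    ultimately show ?thesis unfolding S_def by auto
  qed
  have objeq: "obj (tofun Y') = frob_inner U Y'" for Y'
    unfolding obj_def tofun_def frob_inner_carrier[OF U] by (intro sum.cong refl) auto
  have "S \<noteq> {}" using inS[OF Y0 Y0M] by auto
  moreover have "continuous_on S obj"
    unfolding obj_def
    by (intro continuous_on_sum continuous_on_mult continuous_on_const continuous_on_subset[OF continuous_on_product_coordinates]) auto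
  ultimately obtain f where fS: "f \<in> S" and fmax: "\<And>g. g \<in> S \<Longrightarrow> obj g \<le> obj f"
    using continuous_attains_sup[OF compS] by blast
  define Y where "Y = mat d r f"
  have Yc: "Y \<in> carrier_mat d r" unfolding Y_def by simp
  have Mc: "M \<in> carrier_mat d d" using Y0M Y0 by auto
  have YM: "Y * transpose_mat Y = M"
  proof (rule eq_matI)
    fix i j assume "i < dim_row M" "j < dim_col M"
    then have ij: "i < d" "j < d" using Mc by auto
    have "(Y * transpose_mat Y) $$ (i,j) = (\<Sum>k<r. Y $$ (i,k) * Y $$ (j,k))"
      by (rule gram_entry[OF Yc Yc ij])
    also have "\<dots> = (\<Sum>k<r. f (i,k) * f (j,k))"
      unfolding Y_def using ij by simp
    also have "\<dots> = M $$ (i,j)" using fS ij unfolding S_def by auto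
    finally show "(Y * transpose_mat Y) $$ (i,j) = M $$ (i,j)" .
  qed (use Mc Yc in auto)
  have "obj f = frob_inner U Y"
    unfolding obj_def Y_def frob_inner_carrier[OF U] by (intro sum.cong refl) auto
  then show ?thesis using Yc YM fmax inS objeq by metis
qed

definition hh :: "nat \<Rightarrow> (nat \<Rightarrow> real) \<Rightarrow> real mat" where
  "hh r x = mat r r (\<lambda>(a,b). (if a = b then 1 else 0) - 2 * x a * x b)"

lemma hh_carrier[simp]: "hh r x \<in> carrier_mat r r" unfolding hh_def by simp

lemma hh_dims[simp]: "dim_row (hh r x) = r" "dim_col (hh r x) = r" unfolding hh_def by simp_all

lemma hh_transpose: "transpose_mat (hh r x) = hh r x"
  unfolding hh_def by (rule eq_matI) auto

lemma hh_prod: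
  assumes "a < r" "b < r"
  shows "(hh r x * hh r z) $$ (a,b) = (if a = b then 1 else 0) - 2 * x a * x b - 2 * z a * z b
      + 4 * (\<Sum>t<r. x t * z t) * x a * z b"
proof -
  have "(hh r x * hh r z) $$ (a,b) = (\<Sum>t<r. ((if a = t then 1 else 0) - 2 * x a * x t) * ((if t = b then 1 else 0) - 2 * z t * z b))"
    using assms by (subst mult_entry[of _ r r _ r]) (auto simp: hh_def intro!: sum.cong)
  also have "\<dots> = (\<Sum>t<r. (if a = t then (if t = b then 1 else 0) else 0) - (if a = t then 2 * z t * z b else 0)
     - (if t = b then 2 * x a * x t else 0) + 4 * x a * z b * (x t * z t))"
    by (intro sum.cong refl) (auto simp: algebra_simps)
  also have "\<dots> = (\<Sum>t<r. (if a = t then (if t = b then 1 else 0) else 0)) - (\<Sum>t<r. (if a = t then 2 * z t * z b else 0))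
     - (\<Sum>t<r. (if t = b then 2 * x a * x t else 0)) + 4 * x a * z b * (\<Sum>t<r. x t * z t)"
    by (simp only: sum.distrib sum_subtractf sum_distrib_left)
  also have "\<dots> = (if a = b then 1 else 0) - 2 * x a * x b - 2 * z a * z b
      + 4 * (\<Sum>t<r. x t * z t) * x a * z b"
    using assms by simp
  finally show ?thesis .
qed

lemma orth_transform:
  fixes Y G :: "real mat"
  assumes Y: "Y \<in> carrier_mat d r" and G: "G \<in> carrier_mat r r" and GG: "G * transpose_mat G = 1\<^sub>m r"
  shows "(Y * G) * transpose_mat (Y * G) = Y * transpose_mat Y"
proof -
  have "(Y * G) * transpose_mat (Y * G) = (Y * G) * (transpose_mat G * transpose_mat Y)"
    using Y G by (simp add: transpose_mult)
  also have "\<dots> = Y * (G * transpose_mat G) * transpose_mat Y"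
    using Y G by (simp add: assoc_mult_mat[of _ d r _ r _ d] assoc_mult_mat[of _ r r _ r _ d])
  also have "\<dots> = Y * transpose_mat Y" using GG Y by simp
  finally show ?thesis .
qed

lemma value_transform:
  fixes U Y G :: "real mat"
  assumes U: "U \<in> carrier_mat d r" and Y: "Y \<in> carrier_mat d r" and G: "G \<in> carrier_mat r r"
  shows "frob_inner U (Y * G) = (\<Sum>a<r. \<Sum>b<r. (\<Sum>i<d. U $$ (i,a) * Y $$ (i,b)) * G $$ (b,a))"
proof -
  have "frob_inner U (Y * G) = (\<Sum>i<d. \<Sum>a<r. \<Sum>b<r. U $$ (i,a) * Y $$ (i,b) * G $$ (b,a))"
    unfolding frob_inner_carrier[OF U]
    by (intro sum.cong refl) (simp add: mult_entry[OF Y G] sum_distrib_left mult.assoc)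
  also have "\<dots> = (\<Sum>a<r. \<Sum>i<d. \<Sum>b<r. U $$ (i,a) * Y $$ (i,b) * G $$ (b,a))"
    by (rule sum.swap)
  also have "\<dots> = (\<Sum>a<r. \<Sum>b<r. \<Sum>i<d. U $$ (i,a) * Y $$ (i,b) * G $$ (b,a))"
    by (intro sum.cong refl sum.swap)
  also have "\<dots> = (\<Sum>a<r. \<Sum>b<r. (\<Sum>i<d. U $$ (i,a) * Y $$ (i,b)) * G $$ (b,a))"
    by (simp add: sum_distrib_right)
  finally show ?thesis .
qed

lemma two_point_sum:
  fixes f :: "nat \<Rightarrow> real"
  assumes "k < r" "l < r" "k \<noteq> l"
  shows "(\<Sum>t<r. (if t = k then p else if t = l then q else 0) * f t) = p * f k + q * f l"
proof -
  have "(\<Sum>t<r. (if t = k then p else if t = l then q else 0) * f t)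
      = (\<Sum>t<r. (if t = k then p * f k else 0) + (if t = l then q * f l else 0))"
    by (intro sum.cong refl) (use assms in auto)
  also have "\<dots> = p * f k + q * f l" using assms by (simp add: sum.distrib)
  finally show ?thesis .
qed

lemma two_point_bilin:
  fixes C :: "nat \<Rightarrow> nat \<Rightarrow> real"
  assumes kl: "k < r" "l < r" "k \<noteq> l"
  shows "(\<Sum>a<r. \<Sum>b<r. (if a = k then p1 else if a = l then q1 else 0) * C a b * (if b = k then p2 else if b = l then q2 else 0))
     = p1 * (p2 * C k k + q2 * C k l) + q1 * (p2 * C l k + q2 * C l l)"
proof -
  have "(\<Sum>a<r. \<Sum>b<r. (if a = k then p1 else if a = l then q1 else 0) * C a b * (if b = k then p2 else if b = l then q2 else 0))
    = (\<Sum>a<r. (if a = k then p1 else if a = l then q1 else 0) * (\<Sum>b<r. (if b = k then p2 else if b = l then q2 else 0) * C a b))"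
    by (simp add: sum_distrib_left algebra_simps)
  also have "\<dots> = (\<Sum>a<r. (if a = k then p1 else if a = l then q1 else 0) * (p2 * C a k + q2 * C a l))"
    by (simp only: two_point_sum[OF kl])
  also have "\<dots> = p1 * (p2 * C k k + q2 * C k l) + q1 * (p2 * C l k + q2 * C l l)"
    by (rule two_point_sum[OF kl])
  finally show ?thesis .
qed

lemma two_point_dot:
  fixes p1 q1 p2 q2 :: real and k l r :: nat
  assumes kl: "k < r" "l < r" "k \<noteq> l"
  shows "(\<Sum>t<r. (if t = k then p1 else if t = l then q1 else 0) * (if t = k then p2 else if t = l then q2 else 0))
     = p1 * p2 + q1 * q2"
  using two_point_sum[OF kl, of p1 q1 "\<lambda>t. (if t = k then p2 else if t = l then q2 else 0)"] kl by simp

lemma abs_bound_lemma: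
  fixes q p w T :: real
  assumes A: "q*(q*T) + q*(p*w) \<ge> 0" and B: "q*(q*T) - q*(p*w) \<ge> 0" and q: "q > 0" and p: "p \<ge> 0"
  shows "p * \<bar>w\<bar> \<le> q * \<bar>T\<bar>"
proof -
  have "q * (q * T) \<ge> 0" using A B by linarith
  then have "q * T \<ge> 0" using q by (simp add: zero_le_mult_iff)
  then have T: "T \<ge> 0" using q by (simp add: zero_le_mult_iff)
  have "q * (p * \<bar>w\<bar>) \<le> q * (q * T)"
    using A B by (cases "w \<ge> 0") auto
  then have "p * \<bar>w\<bar> \<le> q * T" using q by simp
  then show ?thesis using T by simp
qed

lemma omega_zero:
  fixes w T :: real
  assumes H: "\<And>q. 0 < q \<Longrightarrow> q \<le> 1/2 \<Longrightarrow> sqrt (1 - q^2) * \<bar>w\<bar> \<le> q * \<bar>T\<bar>"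
  shows "w = 0"
proof (rule ccontr)
  assume "w \<noteq> 0"
  then have wpos: "\<bar>w\<bar> > 0" by simp
  define q where "q = min (1/2) (\<bar>w\<bar> / (4 * (\<bar>T\<bar> + 1)))"
  have qpos: "q > 0" unfolding q_def using wpos by (simp add: add_pos_nonneg)
  have qle: "q \<le> 1/2" unfolding q_def by (rule min.cobounded1)
  have "q^2 \<le> (1/2)^2" by (rule power_mono) (use qpos qle in auto)
  then have "q^2 \<le> 3/4" by (simp add: power2_eq_square)
  then have "sqrt (1 - q^2) \<ge> 1/2"
    by (intro real_le_rsqrt) (simp add: power2_eq_square)
  then have "(1/2) * \<bar>w\<bar> \<le> sqrt (1 - q^2) * \<bar>w\<bar>" by (intro mult_right_mono) auto
  also have "\<dots> \<le> q * \<bar>T\<bar>" using H[OF qpos qle] .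
  also have "\<dots> \<le> \<bar>w\<bar> / (4 * (\<bar>T\<bar> + 1)) * \<bar>T\<bar>"
    by (intro mult_right_mono) (auto simp: q_def)
  also have "\<dots> < (1/2) * \<bar>w\<bar>"
    using wpos by (simp add: field_simps) (smt (verit) mult_pos_pos mult_nonneg_nonneg)
  finally show False by simp
qed

lemma max_sym_psd:
  fixes U Y M :: "real mat"
  assumes U: "U \<in> carrier_mat d r" and Y: "Y \<in> carrier_mat d r" and YM: "Y * transpose_mat Y = M"
    and mx: "\<forall>Y' \<in> carrier_mat d r. Y' * transpose_mat Y' = M \<longrightarrow> frob_inner U Y' \<le> frob_inner U Y"
  shows "(\<Sum>a<r. \<Sum>b<r. x a * (\<Sum>i<d. U $$ (i,a) * Y $$ (i,b)) * x b) \<ge> 0"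
    and "a < r \<Longrightarrow> b < r \<Longrightarrow> (\<Sum>i<d. U $$ (i,a) * Y $$ (i,b)) = (\<Sum>i<d. U $$ (i,b) * Y $$ (i,a))"
proof -
  define C where "C a b = (\<Sum>i<d. U $$ (i,a) * Y $$ (i,b))" for a b
  have tr: "frob_inner U Y = (\<Sum>a<r. C a a)"
    unfolding frob_inner_carrier[OF U] C_def by (rule sum.swap)
  have maxG: "(\<Sum>a<r. \<Sum>b<r. C a b * G $$ (b,a)) \<le> (\<Sum>a<r. C a a)"
    if G: "G \<in> carrier_mat r r" "G * transpose_mat G = 1\<^sub>m r" for G
  proof -
    have "Y * G \<in> carrier_mat d r" using Y G by auto
    moreover have "(Y * G) * transpose_mat (Y * G) = M" using orth_transform[OF Y G] YM by simp
    ultimately have "frob_inner U (Y * G) \<le> frob_inner U Y" using mx by blast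
    then show ?thesis unfolding value_transform[OF U Y G(1)] tr C_def .
  qed
  have Vexp: "(\<Sum>a<r. \<Sum>b<r. C a b * ((if b = a then 1 else 0) - 2 * x b * x a - 2 * z b * z a + 4 * s * x b * z a))
     = (\<Sum>a<r. C a a) - 2 * (\<Sum>a<r. \<Sum>b<r. x a * C a b * x b) - 2 * (\<Sum>a<r. \<Sum>b<r. z a * C a b * z b)
       + 4 * s * (\<Sum>a<r. \<Sum>b<r. z a * C a b * x b)" for x z s
  proof -
    have "(\<Sum>a<r. \<Sum>b<r. C a b * ((if b = a then 1 else 0) - 2 * x b * x a - 2 * z b * z a + 4 * s * x b * z a))
      = (\<Sum>a<r. (\<Sum>b<r. C a b * (if b = a then 1 else 0)) - 2 * (\<Sum>b<r. x a * C a b * x b) - 2 * (\<Sum>b<r. z a * C a b * z b)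
       + 4 * s * (\<Sum>b<r. z a * C a b * x b))"
      by (intro sum.cong refl) (simp add: sum.distrib sum_subtractf sum_distrib_left algebra_simps)
    also have "\<dots> = (\<Sum>a<r. C a a) - 2 * (\<Sum>a<r. \<Sum>b<r. x a * C a b * x b) - 2 * (\<Sum>a<r. \<Sum>b<r. z a * C a b * z b)
       + 4 * s * (\<Sum>a<r. \<Sum>b<r. z a * C a b * x b)"
    proof -
      have "(\<Sum>b<r. C a b * (if b = a then 1 else 0)) = C a a" if "a < r" for a
      proof -
        have "(\<Sum>b<r. C a b * (if b = a then 1 else 0)) = (\<Sum>b<r. if b = a then C a a else 0)"
          by (intro sum.cong) auto
        then show ?thesis using that by simp
      qed
      then show ?thesis by (simp add: sum.distrib sum_subtractf sum_distrib_left)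
    qed
    finally show ?thesis .
  qed
  have orth2: "(\<Sum>a<r. \<Sum>b<r. x a * C a b * x b) + (\<Sum>a<r. \<Sum>b<r. z a * C a b * z b)
       - 2 * (\<Sum>t<r. x t * z t) * (\<Sum>a<r. \<Sum>b<r. z a * C a b * x b) \<ge> 0"
    if x1: "(\<Sum>t<r. x t * x t) = 1" and z1: "(\<Sum>t<r. z t * z t) = 1" for x z
  proof -
    define G where "G = hh r x * hh r z"
    have Gc: "G \<in> carrier_mat r r" unfolding G_def by (rule mult_carrier_mat[OF hh_carrier hh_carrier])
    have hhx: "hh r x * transpose_mat (hh r x) = 1\<^sub>m r"
      by (rule eq_matI) (auto simp: hh_transpose hh_prod x1 simp del: index_mult_mat(1))
    have hhz: "hh r z * transpose_mat (hh r z) = 1\<^sub>m r"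
      by (rule eq_matI) (auto simp: hh_transpose hh_prod z1 simp del: index_mult_mat(1))
    have "G * transpose_mat G = (hh r x * hh r z) * (hh r z * hh r x)"
      unfolding G_def by (simp add: transpose_mult[OF hh_carrier hh_carrier] hh_transpose)
    also have "\<dots> = hh r x * (hh r z * (hh r z * hh r x))"
      by (rule assoc_mult_mat[OF hh_carrier hh_carrier mult_carrier_mat[OF hh_carrier hh_carrier]])
    also have "hh r z * (hh r z * hh r x) = (hh r z * hh r z) * hh r x"
      by (rule assoc_mult_mat[OF hh_carrier hh_carrier hh_carrier, symmetric])
    also have "hh r z * hh r z = 1\<^sub>m r" using hhz by (simp add: hh_transpose)
    also have "hh r x * (1\<^sub>m r * hh r x) = 1\<^sub>m r" using hhx by (simp add: hh_transpose)
    finally have GG: "G * transpose_mat G = 1\<^sub>m r" .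
    have "(\<Sum>a<r. \<Sum>b<r. C a b * G $$ (b,a)) = (\<Sum>a<r. \<Sum>b<r. C a b * ((if b = a then 1 else 0) - 2 * x b * x a - 2 * z b * z a
      + 4 * (\<Sum>t<r. x t * z t) * x b * z a))"
      unfolding G_def by (intro sum.cong refl) (simp add: hh_prod del: index_mult_mat(1))
    then show ?thesis using maxG[OF Gc GG] unfolding Vexp by linarith
  qed
  have psd1: "(\<Sum>a<r. \<Sum>b<r. x a * C a b * x b) \<ge> 0" if x1: "(\<Sum>t<r. x t * x t) = 1" for x
  proof -
    have hhx: "hh r x * transpose_mat (hh r x) = 1\<^sub>m r"
      by (rule eq_matI) (auto simp: hh_transpose hh_prod x1 simp del: index_mult_mat(1))
    have "(\<Sum>a<r. \<Sum>b<r. C a b * hh r x $$ (b,a)) = (\<Sum>a<r. \<Sum>b<r. C a b * ((if b = a then 1 else 0) - 2 * x b * x a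
        - 2 * (\<lambda>_. 0) b * (\<lambda>_. 0) a + 4 * 0 * x b * (\<lambda>_. 0) a))"
      by (intro sum.cong refl) (simp add: hh_def)
    then show ?thesis using maxG[OF hh_carrier hhx] unfolding Vexp by simp
  qed
  show "(\<Sum>a<r. \<Sum>b<r. x a * C a b * x b) \<ge> 0" for x
  proof -
    define s where "s = (\<Sum>t<r. x t * x t)"
    have s0: "s \<ge> 0" unfolding s_def by (intro sum_nonneg) auto
    show ?thesis
    proof (cases "s = 0")
      case True
      then have "\<forall>t\<in>{..<r}. x t * x t = 0" unfolding s_def
        by (subst sum_nonneg_eq_0_iff[symmetric]) auto
      then have "\<And>t. t < r \<Longrightarrow> x t = 0" by auto
      then show ?thesis by simp
    next
      case False
      then have spos: "s > 0" using s0 by simp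
      define x' where "x' t = x t / sqrt s" for t
      have "(\<Sum>t<r. x' t * x' t) = (\<Sum>t<r. x t * x t) / s"
        unfolding x'_def using spos by (simp add: sum_divide_distrib field_simps)
      then have "(\<Sum>t<r. x' t * x' t) = 1" using spos unfolding s_def by simp
      from psd1[OF this] have "0 \<le> (\<Sum>a<r. \<Sum>b<r. x' a * C a b * x' b)" .
      also have "\<dots> = (\<Sum>a<r. \<Sum>b<r. x a * C a b * x b) / s"
        unfolding x'_def using spos by (simp add: sum_divide_distrib field_simps)
      finally show ?thesis using spos by (simp add: divide_nonneg_pos zero_le_divide_iff)
    qed
  qed
  show "C a b = C b a" if ab: "a < r" "b < r"
  proof (cases "a = b")
    case True then show ?thesis by simp
  next
    case False
    define tp where "tp p q t = (if t = a then p else if t = b then q else (0::real))" for p q t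
    have key: "q^2 * (C a a + C b b) + p * q * (C a b - C b a) \<ge> 0" if pq: "p^2 + q^2 = 1" for p q
    proof -
      have x1: "(\<Sum>t<r. tp 1 0 t * tp 1 0 t) = 1" unfolding tp_def using two_point_dot[OF ab False, of 1 0 1 0] by simp
      have z1: "(\<Sum>t<r. tp p q t * tp p q t) = 1" unfolding tp_def using two_point_dot[OF ab False, of p q p q] pq
        by (simp add: power2_eq_square)
      have "(\<Sum>a<r. \<Sum>b<r. tp 1 0 a * C a b * tp 1 0 b) + (\<Sum>a<r. \<Sum>b<r. tp p q a * C a b * tp p q b)
         - 2 * (\<Sum>t<r. tp 1 0 t * tp p q t) * (\<Sum>a<r. \<Sum>b<r. tp p q a * C a b * tp 1 0 b) \<ge> 0"
        by (rule orth2[OF x1 z1])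
      then have "C a a + (p * (p * C a a + q * C a b) + q * (p * C b a + q * C b b)) - 2 * p * (p * C a a + q * C b a) \<ge> 0"
        unfolding tp_def two_point_bilin[OF ab False] two_point_dot[OF ab False] by simp
      moreover have "(p * p + q * q) * C a a = C a a" using pq by (simp add: power2_eq_square)
      ultimately show ?thesis by (simp add: power2_eq_square algebra_simps)
    qed
    have "C a b - C b a = 0"
    proof (rule omega_zero[where T = "C a a + C b b"])
      fix q :: real assume q: "0 < q" "q \<le> 1/2"
      have q1: "q^2 \<le> 1" using q by (intro power_le_one) auto
      define p where "p = sqrt (1 - q^2)"
      have p2: "p^2 + q^2 = 1" unfolding p_def using q1 by simp
      have p2': "(-p)^2 + q^2 = 1" using p2 by simp
      have A: "q * (q * (C a a + C b b)) + q * (p * (C a b - C b a)) \<ge> 0" using key[OF p2] by (simp add: power2_eq_square algebra_simps)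
      have B: "q * (q * (C a a + C b b)) - q * (p * (C a b - C b a)) \<ge> 0" using key[OF p2'] by (simp add: power2_eq_square algebra_simps)
      have "p * \<bar>C a b - C b a\<bar> \<le> q * \<bar>C a a + C b b\<bar>"
        by (rule abs_bound_lemma[OF A B q(1)]) (use q1 in \<open>simp add: p_def\<close>)
      then show "sqrt (1 - q^2) * \<bar>C a b - C b a\<bar> \<le> q * \<bar>C a a + C b b\<bar>" unfolding p_def .
    qed
    then show ?thesis by simp
  qed
qed

lemma cauchy_sum:
  fixes v :: "nat \<Rightarrow> real"
  shows "(\<Sum>a<r. v a)^2 \<le> real r * (\<Sum>a<r. (v a)^2)"
proof -
  have "0 \<le> (\<Sum>a<r. \<Sum>b<r. (v a - v b)^2)" by (intro sum_nonneg) auto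
  also have "\<dots> = (\<Sum>a<r. \<Sum>b<r. (v a)^2 + (v b)^2 - 2 * (v a * v b))"
    by (intro sum.cong refl) (simp add: power2_eq_square algebra_simps)
  also have "\<dots> = (\<Sum>a<r. \<Sum>b<r. (v a)^2) + (\<Sum>a<r. \<Sum>b<r. (v b)^2) - 2 * (\<Sum>a<r. \<Sum>b<r. v a * v b)"
    by (simp add: sum.distrib sum_subtractf sum_distrib_left)
  also have "(\<Sum>a<r. \<Sum>b<r. v a * v b) = (\<Sum>a<r. v a)^2"
    by (simp add: sum_product power2_eq_square)
  also have "(\<Sum>a<r. \<Sum>b<r. (v a)^2) = real r * (\<Sum>a<r. (v a)^2)" by (simp add: sum_distrib_left)
  also have "(\<Sum>a<r. \<Sum>b<r. (v b)^2) = real r * (\<Sum>a<r. (v a)^2)" by simp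
  finally show ?thesis by simp
qed

lemma sum_swap4:
  fixes F :: "nat \<Rightarrow> nat \<Rightarrow> nat \<Rightarrow> nat \<Rightarrow> real"
  shows "(\<Sum>i<d. \<Sum>j<d. \<Sum>a<r. \<Sum>b<r. F i j a b) = (\<Sum>a<r. \<Sum>b<r. \<Sum>i<d. \<Sum>j<d. F i j a b)"
proof -
  have "(\<Sum>i<d. \<Sum>j<d. \<Sum>a<r. \<Sum>b<r. F i j a b) = (\<Sum>i<d. \<Sum>a<r. \<Sum>j<d. \<Sum>b<r. F i j a b)"
    by (intro sum.cong refl sum.swap)
  also have "\<dots> = (\<Sum>a<r. \<Sum>i<d. \<Sum>j<d. \<Sum>b<r. F i j a b)" by (rule sum.swap)
  also have "\<dots> = (\<Sum>a<r. \<Sum>i<d. \<Sum>b<r. \<Sum>j<d. F i j a b)"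
    by (intro sum.cong refl sum.swap)
  also have "\<dots> = (\<Sum>a<r. \<Sum>b<r. \<Sum>i<d. \<Sum>j<d. F i j a b)"
    by (intro sum.cong refl sum.swap)
  finally show ?thesis .
qed

lemma gram_frob:
  fixes X1 X2 X3 X4 :: "real mat"
  assumes X: "X1 \<in> carrier_mat d r" "X2 \<in> carrier_mat d r" "X3 \<in> carrier_mat d r" "X4 \<in> carrier_mat d r"
  shows "frob_inner (X1 * transpose_mat X2) (X3 * transpose_mat X4)
    = (\<Sum>a<r. \<Sum>b<r. (\<Sum>i<d. X1 $$ (i,a) * X3 $$ (i,b)) * (\<Sum>j<d. X2 $$ (j,a) * X4 $$ (j,b)))"
proof -
  have c: "X1 * transpose_mat X2 \<in> carrier_mat d d" using X by auto
  have "frob_inner (X1 * transpose_mat X2) (X3 * transpose_mat X4)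
    = (\<Sum>i<d. \<Sum>j<d. (\<Sum>a<r. X1 $$ (i,a) * X2 $$ (j,a)) * (\<Sum>b<r. X3 $$ (i,b) * X4 $$ (j,b)))"
    unfolding frob_inner_carrier[OF c] by (intro sum.cong refl) (simp add: gram_entry[OF X(1,2)] gram_entry[OF X(3,4)])
  also have "\<dots> = (\<Sum>i<d. \<Sum>j<d. \<Sum>a<r. \<Sum>b<r. X1 $$ (i,a) * X3 $$ (i,b) * (X2 $$ (j,a) * X4 $$ (j,b)))"
    by (simp add: sum_product algebra_simps)
  also have "\<dots> = (\<Sum>a<r. \<Sum>b<r. \<Sum>i<d. \<Sum>j<d. X1 $$ (i,a) * X3 $$ (i,b) * (X2 $$ (j,a) * X4 $$ (j,b)))"
    by (rule sum_swap4)
  also have "\<dots> = (\<Sum>a<r. \<Sum>b<r. (\<Sum>i<d. X1 $$ (i,a) * X3 $$ (i,b)) * (\<Sum>j<d. X2 $$ (j,a) * X4 $$ (j,b)))"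
    by (simp add: sum_product)
  finally show ?thesis .
qed

lemma frob_minus_sq:
  fixes X Z :: "real mat"
  assumes X: "X \<in> carrier_mat m k" and Z: "Z \<in> carrier_mat m k"
  shows "frob_inner (X - Z) (X - Z) = frob_inner X X - 2 * frob_inner X Z + frob_inner Z Z"
proof -
  have XZ: "X - Z \<in> carrier_mat m k" using X Z by auto
  have "frob_inner (X - Z) (X - Z) = (\<Sum>i<m. \<Sum>j<k. X $$ (i,j) * X $$ (i,j) - 2 * (X $$ (i,j) * Z $$ (i,j)) + Z $$ (i,j) * Z $$ (i,j))"
    unfolding frob_inner_carrier[OF XZ] using X Z by (intro sum.cong refl) (auto simp: algebra_simps)
  also have "\<dots> = frob_inner X X - 2 * frob_inner X Z + frob_inner Z Z"
    unfolding frob_inner_carrier[OF X] frob_inner_carrier[OF Z]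
    by (simp add: sum.distrib sum_subtractf sum_distrib_left)
  finally show ?thesis .
qed

lemma gram_ineq:
  fixes U Y :: "real mat"
  assumes U: "U \<in> carrier_mat d r" and Y: "Y \<in> carrier_mat d r"
    and sym: "\<And>a b. a < r \<Longrightarrow> b < r \<Longrightarrow> (\<Sum>i<d. U $$ (i,a) * Y $$ (i,b)) = (\<Sum>i<d. U $$ (i,b) * Y $$ (i,a))"
    and psd: "\<And>x. (\<Sum>a<r. \<Sum>b<r. x a * (\<Sum>i<d. U $$ (i,a) * Y $$ (i,b)) * x b) \<ge> 0"
  defines "A a b \<equiv> (\<Sum>i<d. U $$ (i,a) * U $$ (i,b))"
    and "B a b \<equiv> (\<Sum>i<d. Y $$ (i,a) * Y $$ (i,b))"
  shows "frob_inner ((U - Y) * transpose_mat (U - Y)) ((U - Y) * transpose_mat (U - Y))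
           + (\<Sum>a<r. \<Sum>b<r. (A a b - B a b)^2)
         \<le> 2 * frob_inner (U * transpose_mat U - Y * transpose_mat Y) (U * transpose_mat U - Y * transpose_mat Y)"
    and "(\<Sum>a<r. B a a - A a a)^2 \<le> real r * (\<Sum>a<r. \<Sum>b<r. (A a b - B a b)^2)"
    and "frob_inner (U - Y) (U - Y) - 4 * frob_inner U (U - Y) \<le> 2 * (\<Sum>a<r. B a a - A a a)"
proof -
  define C where "C a b = (\<Sum>i<d. U $$ (i,a) * Y $$ (i,b))" for a b
  define D where "D = U - Y"
  have Dc: "D \<in> carrier_mat d r" unfolding D_def using U Y by auto
  have Dent: "D $$ (i,a) = U $$ (i,a) - Y $$ (i,a)" if "i < d" "a < r" for i a
    unfolding D_def using U Y that by auto
  have UUc: "U * transpose_mat U \<in> carrier_mat d d" and YYc: "Y * transpose_mat Y \<in> carrier_mat d d" using U Y by auto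
  have P1: "frob_inner (U * transpose_mat U) (U * transpose_mat U) = (\<Sum>a<r. \<Sum>b<r. A a b * A a b)"
    unfolding A_def by (rule gram_frob[OF U U U U])
  have P2: "frob_inner (U * transpose_mat U) (Y * transpose_mat Y) = (\<Sum>a<r. \<Sum>b<r. C a b * C a b)"
    unfolding C_def by (rule gram_frob[OF U U Y Y])
  have P3: "frob_inner (Y * transpose_mat Y) (Y * transpose_mat Y) = (\<Sum>a<r. \<Sum>b<r. B a b * B a b)"
    unfolding B_def by (rule gram_frob[OF Y Y Y Y])
  have dd: "(\<Sum>i<d. D $$ (i,a) * D $$ (i,b)) = A a b + B a b - 2 * C a b" if "a < r" "b < r" for a b
  proof -
    have "(\<Sum>i<d. D $$ (i,a) * D $$ (i,b)) = (\<Sum>i<d. U $$ (i,a) * U $$ (i,b) + Y $$ (i,a) * Y $$ (i,b)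
        - U $$ (i,a) * Y $$ (i,b) - U $$ (i,b) * Y $$ (i,a))"
      by (intro sum.cong refl) (simp add: Dent that algebra_simps)
    also have "\<dots> = A a b + B a b - C a b - C b a"
      unfolding A_def B_def C_def by (simp add: sum.distrib sum_subtractf)
    also have "C b a = C a b" unfolding C_def using sym[OF that] by simp
    finally show ?thesis by simp
  qed
  have QQ: "frob_inner (D * transpose_mat D) (D * transpose_mat D) = (\<Sum>a<r. \<Sum>b<r. (A a b + B a b - 2 * C a b) * (A a b + B a b - 2 * C a b))"
    unfolding gram_frob[OF Dc Dc Dc Dc] by (intro sum.cong refl) (simp add: dd)
  have pos: "(\<Sum>a<r. \<Sum>b<r. C a b * (A a b + B a b - 2 * C a b)) \<ge> 0"
  proof -
    have "(\<Sum>a<r. \<Sum>b<r. C a b * (A a b + B a b - 2 * C a b)) = (\<Sum>a<r. \<Sum>b<r. \<Sum>i<d. D $$ (i,a) * C a b * D $$ (i,b))"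
    proof (intro sum.cong refl)
      fix a b assume ab: "a \<in> {..<r}" "b \<in> {..<r}"
      have e: "A a b + B a b - 2 * C a b = (\<Sum>i<d. D $$ (i,a) * D $$ (i,b))" using dd ab by simp
      show "C a b * (A a b + B a b - 2 * C a b) = (\<Sum>i<d. D $$ (i,a) * C a b * D $$ (i,b))"
        unfolding e by (simp add: sum_distrib_left algebra_simps)
    qed
    also have "\<dots> = (\<Sum>a<r. \<Sum>i<d. \<Sum>b<r. D $$ (i,a) * C a b * D $$ (i,b))"
      by (intro sum.cong refl sum.swap)
    also have "\<dots> = (\<Sum>i<d. \<Sum>a<r. \<Sum>b<r. D $$ (i,a) * C a b * D $$ (i,b))"
      by (rule sum.swap)
    also have "\<dots> \<ge> 0"
    proof (rule sum_nonneg)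
      fix i assume "i \<in> {..<d}"
      show "0 \<le> (\<Sum>a<r. \<Sum>b<r. D $$ (i,a) * C a b * D $$ (i,b))"
        using psd[of "\<lambda>a. D $$ (i,a)"] unfolding C_def .
    qed
    finally show ?thesis .
  qed
  have iden: "2 * ((\<Sum>a<r. \<Sum>b<r. A a b * A a b) - 2 * (\<Sum>a<r. \<Sum>b<r. C a b * C a b) + (\<Sum>a<r. \<Sum>b<r. B a b * B a b))
     - (\<Sum>a<r. \<Sum>b<r. (A a b + B a b - 2 * C a b) * (A a b + B a b - 2 * C a b))
     = (\<Sum>a<r. \<Sum>b<r. (A a b - B a b)^2) + 4 * (\<Sum>a<r. \<Sum>b<r. C a b * (A a b + B a b - 2 * C a b))"
  proof -
    have "(\<Sum>a<r. \<Sum>b<r. 2 * (A a b * A a b) - 4 * (C a b * C a b) + 2 * (B a b * B a b)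
       - (A a b + B a b - 2 * C a b) * (A a b + B a b - 2 * C a b))
     = (\<Sum>a<r. \<Sum>b<r. (A a b - B a b)^2 + 4 * (C a b * (A a b + B a b - 2 * C a b)))"
      by (intro sum.cong refl) (simp add: power2_eq_square algebra_simps)
    then show ?thesis by (simp add: sum.distrib sum_subtractf sum_distrib_left)
  qed
  show "frob_inner ((U - Y) * transpose_mat (U - Y)) ((U - Y) * transpose_mat (U - Y))
           + (\<Sum>a<r. \<Sum>b<r. (A a b - B a b)^2)
         \<le> 2 * frob_inner (U * transpose_mat U - Y * transpose_mat Y) (U * transpose_mat U - Y * transpose_mat Y)"
    unfolding D_def[symmetric] frob_minus_sq[OF UUc YYc] P1 P2 P3 QQ using iden pos by linarith
  show "(\<Sum>a<r. B a a - A a a)^2 \<le> real r * (\<Sum>a<r. \<Sum>b<r. (A a b - B a b)^2)"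
  proof -
    have "(\<Sum>a<r. B a a - A a a)^2 \<le> real r * (\<Sum>a<r. (B a a - A a a)^2)" by (rule cauchy_sum)
    also have "(\<Sum>a<r. (B a a - A a a)^2) \<le> (\<Sum>a<r. \<Sum>b<r. (A a b - B a b)^2)"
    proof (intro sum_mono)
      fix a assume "a \<in> {..<r}"
      then have "(A a a - B a a)^2 \<le> (\<Sum>b<r. (A a b - B a b)^2)"
        using member_le_sum[of a "{..<r}" "\<lambda>b. (A a b - B a b)^2"] by auto
      then show "(B a a - A a a)^2 \<le> (\<Sum>b<r. (A a b - B a b)^2)" by (simp add: power2_commute)
    qed
    then have "real r * (\<Sum>a<r. (B a a - A a a)^2) \<le> real r * (\<Sum>a<r. \<Sum>b<r. (A a b - B a b)^2)"
      by (intro mult_left_mono) auto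
    finally show ?thesis .
  qed
  show "frob_inner (U - Y) (U - Y) - 4 * frob_inner U (U - Y) \<le> 2 * (\<Sum>a<r. B a a - A a a)"
  proof -
    have "frob_inner (U - Y) (U - Y) - 4 * frob_inner U (U - Y)
        = (\<Sum>i<d. \<Sum>a<r. (U $$ (i,a) - Y $$ (i,a))^2 - 4 * (U $$ (i,a) * (U $$ (i,a) - Y $$ (i,a))))"
    proof -
      have "frob_inner D D - 4 * frob_inner U D = (\<Sum>i<d. \<Sum>a<r. D $$ (i,a) * D $$ (i,a) - 4 * (U $$ (i,a) * D $$ (i,a)))"
        unfolding frob_inner_carrier[OF Dc] frob_inner_carrier[OF U]
        by (simp add: sum_subtractf sum_distrib_left)
      also have "\<dots> = (\<Sum>i<d. \<Sum>a<r. (U $$ (i,a) - Y $$ (i,a))^2 - 4 * (U $$ (i,a) * (U $$ (i,a) - Y $$ (i,a))))"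
        by (intro sum.cong refl) (simp add: Dent power2_eq_square)
      finally show ?thesis unfolding D_def .
    qed
    also have "\<dots> \<le> (\<Sum>i<d. \<Sum>a<r. 2 * (Y $$ (i,a) * Y $$ (i,a)) - 2 * (U $$ (i,a) * U $$ (i,a)))"
    proof (intro sum_mono)
      fix i a
      have "0 \<le> (U $$ (i,a) - Y $$ (i,a))^2" by simp
      then show "(U $$ (i,a) - Y $$ (i,a))^2 - 4 * (U $$ (i,a) * (U $$ (i,a) - Y $$ (i,a)))
          \<le> 2 * (Y $$ (i,a) * Y $$ (i,a)) - 2 * (U $$ (i,a) * U $$ (i,a))"
        by (simp add: power2_eq_square algebra_simps)
    qed
    also have "\<dots> = 2 * (\<Sum>a<r. B a a - A a a)"
    proof -
      have "(\<Sum>i<d. \<Sum>a<r. 2 * (Y $$ (i,a) * Y $$ (i,a)) - 2 * (U $$ (i,a) * U $$ (i,a)))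
          = (\<Sum>a<r. \<Sum>i<d. 2 * (Y $$ (i,a) * Y $$ (i,a)) - 2 * (U $$ (i,a) * U $$ (i,a)))" by (rule sum.swap)
      then show ?thesis unfolding A_def B_def by (simp add: sum_subtractf sum_distrib_left)
    qed
    finally show ?thesis .
  qed
qed

lemma final_real:
  fixes E F G2 T W Sa Sq Seq Sea lam kap del r :: real
  assumes h1: "3 * Sa \<le> Sq + 2 * Seq + 4 * Sea + 2 * lam * W"
    and h2: "(1 - del) * E^2 \<le> Sa" and h3: "Sq \<le> (1 + del) * F^2"
    and h4: "\<bar>Seq\<bar> \<le> kap * F" and h5: "\<bar>Sea\<bar> \<le> kap * E"
    and h6: "F^2 + G2 \<le> 2 * E^2" and h7: "T^2 \<le> r * G2" and h8: "W \<le> 2 * T"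
    and E: "E \<ge> 0" and F: "F \<ge> 0" and G2: "G2 \<ge> 0" and kap: "kap \<ge> 0" and lam: "lam \<ge> 0" and r: "r \<ge> 0"
    and del: "0 \<le> del" "del \<le> 1/10"
  shows "E \<le> 14 * kap + 12 * lam * sqrt r"
proof -
  have s2: "sqrt 2 \<le> 3/2"
  proof -
    have "sqrt 2 \<le> sqrt ((3/2)^2)" by (intro real_sqrt_le_mono) (simp add: power2_eq_square)
    then show ?thesis by simp
  qed
  have F2: "F^2 \<le> 2 * E^2" using h6 G2 by linarith
  have Fb: "F \<le> sqrt 2 * E"
  proof -
    have "sqrt (F^2) \<le> sqrt (2 * E^2)" using F2 by (rule real_sqrt_le_mono)
    then show ?thesis using F E by (simp add: real_sqrt_mult)
  qed
  have Tb: "T \<le> sqrt r * sqrt 2 * E"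
  proof -
    have "G2 \<le> 2 * E^2" using h6 by (smt (verit) zero_le_power2)
    then have "r * G2 \<le> r * (2 * E^2)" using r by (rule mult_left_mono)
    then have "T^2 \<le> r * (2 * E^2)" using h7 by linarith
    then have "sqrt (T^2) \<le> sqrt (r * (2 * E^2))" by (rule real_sqrt_le_mono)
    then have "\<bar>T\<bar> \<le> sqrt r * sqrt 2 * E" using E by (simp add: real_sqrt_mult)
    then show ?thesis by linarith
  qed
  have a1: "(1 + del) * F^2 \<le> (1 + del) * (2 * E^2)" using F2 del by (intro mult_left_mono) auto
  have a2: "kap * F \<le> kap * (sqrt 2 * E)" using Fb kap by (rule mult_left_mono)
  have a3: "lam * T \<le> lam * (sqrt r * sqrt 2 * E)" using Tb lam by (rule mult_left_mono)
  have a4: "lam * W \<le> lam * (2 * T)" using h8 lam by (rule mult_left_mono)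
  have "(1 - del) * E^2 * 3 \<le> (1 + del) * (2 * E^2) + 2 * (kap * (sqrt 2 * E)) + 4 * (kap * E) + 4 * (lam * (sqrt r * sqrt 2 * E))"
    using h1 h2 h3 h4 h5 a1 a2 a3 a4 by linarith
  then have b1: "(1 - 5 * del) * E^2 \<le> (2 * sqrt 2 * kap + 4 * kap + 4 * sqrt 2 * (lam * sqrt r)) * E"
    by (simp add: algebra_simps power2_eq_square)
  have "(2 * sqrt 2 * kap + 4 * kap + 4 * sqrt 2 * (lam * sqrt r)) \<le> 2 * (3/2) * kap + 4 * kap + 4 * (3/2) * (lam * sqrt r)"
    using s2 kap lam r by (intro add_mono mult_right_mono mult_left_mono) auto
  then have b2: "(2 * sqrt 2 * kap + 4 * kap + 4 * sqrt 2 * (lam * sqrt r)) * E \<le> (7 * kap + 6 * (lam * sqrt r)) * E"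
    using E by (intro mult_right_mono) auto
  have b3: "(1/2) * E^2 \<le> (1 - 5 * del) * E^2" using del by (intro mult_right_mono) auto
  have "(1/2) * (E * E) \<le> (7 * kap + 6 * (lam * sqrt r)) * E" using b1 b2 b3 by (simp add: power2_eq_square)
  then have "E * E \<le> (14 * kap + 12 * (lam * sqrt r)) * E" by (simp add: algebra_simps)
  moreover have "0 \<le> 14 * kap + 12 * (lam * sqrt r)" using kap lam r by simp
  ultimately show ?thesis using E
    by (cases "E = 0") (auto simp: mult_le_cancel_right)
qed

lemma gram_diff_sym:
  fixes U Y :: "real mat"
  assumes U: "U \<in> carrier_mat d r" and Y: "Y \<in> carrier_mat d r"
  shows "symmetric_mat (U * transpose_mat U - Y * transpose_mat Y)"
proof -
  have c: "U * transpose_mat U - Y * transpose_mat Y \<in> carrier_mat d d" using U Y by auto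
  have "transpose_mat (U * transpose_mat U - Y * transpose_mat Y) = U * transpose_mat U - Y * transpose_mat Y"
  proof (rule eq_matI)
    fix i j assume "i < dim_row (U * transpose_mat U - Y * transpose_mat Y)" "j < dim_col (U * transpose_mat U - Y * transpose_mat Y)"
    then have ij: "i < d" "j < d" using c by auto
    show "transpose_mat (U * transpose_mat U - Y * transpose_mat Y) $$ (i, j) = (U * transpose_mat U - Y * transpose_mat Y) $$ (i, j)"
      using ij c U Y by (simp add: gram_entry[OF U U] gram_entry[OF Y Y] mult.commute del: index_mult_mat(1))
  qed (use c in auto)
  then show ?thesis unfolding symmetric_mat_def using c by auto
qed

lemma gram_sym:
  fixes D :: "real mat"
  assumes D: "D \<in> carrier_mat d r"
  shows "symmetric_mat (D * transpose_mat D)"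
proof -
  have c: "D * transpose_mat D \<in> carrier_mat d d" using D by auto
  have "transpose_mat (D * transpose_mat D) = D * transpose_mat D"
  proof (rule eq_matI)
    fix i j assume "i < dim_row (D * transpose_mat D)" "j < dim_col (D * transpose_mat D)"
    then have ij: "i < d" "j < d" using c by auto
    show "transpose_mat (D * transpose_mat D) $$ (i, j) = (D * transpose_mat D) $$ (i, j)"
      using ij c D by (simp add: gram_entry[OF D D] mult.commute del: index_mult_mat(1))
  qed (use c in auto)
  then show ?thesis unfolding symmetric_mat_def using c by auto
qed

lemma gram_rank:
  fixes D :: "real mat"
  assumes D: "D \<in> carrier_mat d r"
  shows "mat_rank (D * transpose_mat D) \<le> r"
proof -
  have "D * transpose_mat D = mat d d (\<lambda>(i,j). \<Sum>k<r. D $$ (i,k) * D $$ (j,k))"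
    by (rule eq_matI) (use D in \<open>auto simp: gram_entry[OF D D] simp del: index_mult_mat(1)\<close>)
  moreover have "dim_row (D * transpose_mat D) = d" using D by simp
  ultimately show ?thesis unfolding mat_rank_def
    using rank_outer_sum[where n=d and m=r and f="\<lambda>k i. D $$ (i,k)" and g="\<lambda>k j. D $$ (j,k)"] by simp
qed

lemma gram_diff_rank:
  fixes U Y :: "real mat"
  assumes U: "U \<in> carrier_mat d r" and Y: "Y \<in> carrier_mat d r"
  shows "mat_rank (U * transpose_mat U - Y * transpose_mat Y) \<le> 2 * r"
proof -
  define A1 where "A1 = mat d d (\<lambda>(i,j). \<Sum>k<r. U $$ (i,k) * U $$ (j,k))"
  define A2 where "A2 = mat d d (\<lambda>(i,j). \<Sum>k<r. (- Y $$ (i,k)) * Y $$ (j,k))"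
  have eq: "U * transpose_mat U - Y * transpose_mat Y = A1 + A2"
    by (rule eq_matI) (use U Y in \<open>auto simp: A1_def A2_def gram_entry[OF U U] gram_entry[OF Y Y] sum_negf simp del: index_mult_mat(1)\<close>)
  have "vec_space.rank d (A1 + A2) \<le> vec_space.rank d A1 + vec_space.rank d A2"
    by (rule vec_space.rank_subadditive) (auto simp: A1_def A2_def)
  moreover have "vec_space.rank d A1 \<le> r" unfolding A1_def
    using rank_outer_sum[where n=d and m=r and f="\<lambda>k i. U $$ (i,k)" and g="\<lambda>k j. U $$ (j,k)"] by simp
  moreover have "vec_space.rank d A2 \<le> r" unfolding A2_def
    using rank_outer_sum[where n=d and m=r and f="\<lambda>k i. - Y $$ (i,k)" and g="\<lambda>k j. Y $$ (j,k)"] by simp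
  moreover have "dim_row (U * transpose_mat U - Y * transpose_mat Y) = d" using U Y by simp
  ultimately show ?thesis unfolding mat_rank_def eq by simp
qed

lemma landscape:
  fixes U Y M :: "real mat" and X :: "nat \<Rightarrow> real mat" and eps :: "nat \<Rightarrow> real"
  assumes Xc: "\<forall>i<n. X i \<in> carrier_mat d d"
    and sos: "second_order_stationary (f_obj n X eps M lam) d r U"
    and Y: "Y \<in> carrier_mat d r" and YM: "Y * transpose_mat Y = M"
    and sym: "\<And>a b. a < r \<Longrightarrow> b < r \<Longrightarrow> (\<Sum>i<d. U $$ (i,a) * Y $$ (i,b)) = (\<Sum>i<d. U $$ (i,b) * Y $$ (i,a))"
    and psd: "\<And>x. (\<Sum>a<r. \<Sum>b<r. x a * (\<Sum>i<d. U $$ (i,a) * Y $$ (i,b)) * x b) \<ge> 0"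
    and good: "good_event d n r sigma delta Cev X eps"
    and n: "n > 0" and del: "0 \<le> delta" "delta \<le> 1/10" and lam: "lam \<ge> 0" and sig: "sigma \<ge> 0" and Cev: "Cev \<ge> 0"
  shows "frob_norm (U * transpose_mat U - M) \<le> 14 * (Cev * sigma * sqrt (real d * real r)) + 12 * lam * sqrt (real r)"
proof -
  have U: "U \<in> carrier_mat d r" using sos unfolding second_order_stationary_def by auto
  define D where "D = U - Y"
  define Dl where "Dl = U * transpose_mat U - Y * transpose_mat Y"
  define Q where "Q = D * transpose_mat D"
  define S where "S = U * transpose_mat D + D * transpose_mat U"
  have Dc: "D \<in> carrier_mat d r" unfolding D_def using U Y by auto
  have Dent: "D $$ (i,a) = U $$ (i,a) - Y $$ (i,a)" if "i < d" "a < r" for i a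
    unfolding D_def using U Y that by auto
  have Dlc: "Dl \<in> carrier_mat d d" unfolding Dl_def using U Y by auto
  have Qc: "Q \<in> carrier_mat d d" unfolding Q_def using Dc by auto
  have MDl: "U * transpose_mat U - M = Dl" unfolding Dl_def YM ..
  note fo = fo_so(1)[OF sos Dc Xc] and so = fo_so(2)[OF sos Dc Xc]
  define a where "a i = meas n X Dl i" for i
  define q where "q i = meas n X Q i" for i
  have ra: "obs n X eps M i - meas n X (U * transpose_mat U) i = eps i - a i" if "i < n" for i
  proof -
    have Xi: "X i \<in> carrier_mat d d" using Xc that by auto
    have "frob_inner (X i) Dl = 1 * frob_inner (X i) (U * transpose_mat U) + (-1) * frob_inner (X i) (Y * transpose_mat Y) + 0 * frob_inner (X i) Dl"
      by (rule frob_lin[OF Xi]) (use U Y in \<open>auto simp: Dl_def\<close>)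
    then show ?thesis unfolding obs_def a_def meas_def YM[symmetric] by (simp add: diff_divide_distrib)
  qed
  have sa: "meas n X S i = a i + q i" if "i < n" for i
  proof -
    have Xi: "X i \<in> carrier_mat d d" using Xc that by auto
    have "frob_inner (X i) S = 1 * frob_inner (X i) Dl + 1 * frob_inner (X i) Q + 0 * frob_inner (X i) Q"
    proof (rule frob_lin[OF Xi])
      fix j l assume jl: "j < d" "l < d"
      have "S $$ (j,l) = (\<Sum>k<r. U $$ (j,k) * D $$ (l,k)) + (\<Sum>k<r. D $$ (j,k) * U $$ (l,k))"
        unfolding S_def using U Dc jl by (simp add: gram_entry[OF U Dc jl] gram_entry[OF Dc U jl] del: index_mult_mat(1))
      also have "\<dots> = (\<Sum>k<r. U $$ (j,k) * U $$ (l,k)) - (\<Sum>k<r. Y $$ (j,k) * Y $$ (l,k)) + (\<Sum>k<r. D $$ (j,k) * D $$ (l,k))"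
      proof -
        have "(\<Sum>k<r. U $$ (j,k) * D $$ (l,k)) + (\<Sum>k<r. D $$ (j,k) * U $$ (l,k))
            = (\<Sum>k<r. U $$ (j,k) * D $$ (l,k) + D $$ (j,k) * U $$ (l,k))" by (simp add: sum.distrib)
        also have "\<dots> = (\<Sum>k<r. U $$ (j,k) * U $$ (l,k) - Y $$ (j,k) * Y $$ (l,k) + D $$ (j,k) * D $$ (l,k))"
          by (intro sum.cong refl) (simp add: Dent jl algebra_simps)
        also have "\<dots> = (\<Sum>k<r. U $$ (j,k) * U $$ (l,k)) - (\<Sum>k<r. Y $$ (j,k) * Y $$ (l,k)) + (\<Sum>k<r. D $$ (j,k) * D $$ (l,k))"
          by (simp add: sum.distrib sum_subtractf)
        finally show ?thesis .
      qed
      also have "\<dots> = Dl $$ (j,l) + Q $$ (j,l)"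
        unfolding Dl_def Q_def using U Y Dc jl
        by (simp add: gram_entry[OF U U jl] gram_entry[OF Y Y jl] gram_entry[OF Dc Dc jl] del: index_mult_mat(1))
      finally show "S $$ (j,l) = 1 * Dl $$ (j,l) + 1 * Q $$ (j,l) + 0 * Q $$ (j,l)" by simp
    qed
    then show ?thesis unfolding a_def q_def meas_def by (simp add: add_divide_distrib)
  qed
  have FO: "(\<Sum>i<n. (eps i - a i) * (a i + q i)) = 2 * lam * frob_inner U D"
  proof -
    have "(\<Sum>i<n. (obs n X eps M i - meas n X (U * transpose_mat U) i) * meas n X S i) = (\<Sum>i<n. (eps i - a i) * (a i + q i))"
      by (intro sum.cong refl) (simp add: ra sa)
    then show ?thesis using fo unfolding S_def[symmetric] Q_def[symmetric] by simp
  qed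
  have SO: "(\<Sum>i<n. (a i + q i)^2) - 2 * (\<Sum>i<n. (eps i - a i) * q i) + 2 * lam * frob_inner D D \<ge> 0"
  proof -
    have "(\<Sum>i<n. (meas n X S i)^2) = (\<Sum>i<n. (a i + q i)^2)"
      by (intro sum.cong refl) (simp add: sa)
    moreover have "(\<Sum>i<n. (obs n X eps M i - meas n X (U * transpose_mat U) i) * meas n X Q i) = (\<Sum>i<n. (eps i - a i) * q i)"
      by (intro sum.cong refl) (simp add: ra q_def)
    ultimately show ?thesis using so unfolding S_def[symmetric] Q_def[symmetric] by simp
  qed
  define Sa where "Sa = (\<Sum>i<n. (a i)^2)"
  define Sq where "Sq = (\<Sum>i<n. (q i)^2)"
  define Saq where "Saq = (\<Sum>i<n. a i * q i)"
  define Sea where "Sea = (\<Sum>i<n. eps i * a i)"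
  define Seq where "Seq = (\<Sum>i<n. eps i * q i)"
  have e1: "(\<Sum>i<n. (eps i - a i) * (a i + q i)) = Sea + Seq - Sa - Saq"
  proof -
    have "(\<Sum>i<n. (eps i - a i) * (a i + q i)) = (\<Sum>i<n. eps i * a i + eps i * q i - (a i)^2 - a i * q i)"
      by (intro sum.cong refl) (simp add: power2_eq_square algebra_simps)
    then show ?thesis unfolding Sa_def Saq_def Sea_def Seq_def by (simp add: sum.distrib sum_subtractf)
  qed
  have e2: "(\<Sum>i<n. (a i + q i)^2) = Sa + 2 * Saq + Sq"
  proof -
    have "(\<Sum>i<n. (a i + q i)^2) = (\<Sum>i<n. (a i)^2 + 2 * (a i * q i) + (q i)^2)"
      by (intro sum.cong refl) (simp add: power2_eq_square algebra_simps)
    then show ?thesis unfolding Sa_def Saq_def Sq_def by (simp add: sum.distrib sum_distrib_left)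
  qed
  have e3: "(\<Sum>i<n. (eps i - a i) * q i) = Seq - Saq"
  proof -
    have "(\<Sum>i<n. (eps i - a i) * q i) = (\<Sum>i<n. eps i * q i - a i * q i)"
      by (intro sum.cong refl) (simp add: algebra_simps)
    then show ?thesis unfolding Saq_def Seq_def by (simp add: sum_subtractf)
  qed
  have main: "3 * Sa \<le> Sq + 2 * Seq + 4 * Sea + 2 * lam * (frob_inner D D - 4 * frob_inner U D)"
  proof -
    have "2 * lam * (frob_inner D D - 4 * frob_inner U D) = 2 * lam * frob_inner D D - 4 * (2 * lam * frob_inner U D)"
      by (simp add: algebra_simps)
    then show ?thesis using FO SO e1 e2 e3 by linarith
  qed
  have G2: "good_event d n r sigma delta Cev X eps" by (rule good)
  have rip: "\<And>A. A \<in> carrier_mat d d \<Longrightarrow> symmetric_mat A \<Longrightarrow> mat_rank A \<le> 2 * r \<Longrightarrow>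
      (1 - delta) * (frob_norm A)^2 \<le> meas_sqnorm n X A \<and> meas_sqnorm n X A \<le> (1 + delta) * (frob_norm A)^2"
    using good unfolding good_event_def by blast
  have noise: "\<And>A. A \<in> carrier_mat d d \<Longrightarrow> symmetric_mat A \<Longrightarrow> mat_rank A \<le> 2 * r \<Longrightarrow>
      \<bar>(1 / real n) * (\<Sum>i<n. eps i * frob_inner (X i) A)\<bar> \<le> Cev * sigma * sqrt (real d * real r / real n) * frob_norm A"
    using good unfolding good_event_def by blast
  have Dls: "symmetric_mat Dl" unfolding Dl_def by (rule gram_diff_sym[OF U Y])
  have Dlr: "mat_rank Dl \<le> 2 * r" unfolding Dl_def by (rule gram_diff_rank[OF U Y])
  have Qs: "symmetric_mat Q" unfolding Q_def by (rule gram_sym[OF Dc])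
  have Qr: "mat_rank Q \<le> 2 * r" using gram_rank[OF Dc] unfolding Q_def by simp
  define E where "E = frob_norm Dl"
  define F where "F = frob_norm Q"
  define kap where "kap = Cev * sigma * sqrt (real d * real r)"
  have h2: "(1 - delta) * E^2 \<le> Sa"
    using rip[OF Dlc Dls Dlr] unfolding E_def Sa_def meas_sqnorm_def a_def by simp
  have h3: "Sq \<le> (1 + delta) * F^2"
    using rip[OF Qc Qs Qr] unfolding F_def Sq_def meas_sqnorm_def q_def by simp
  have noise2: "\<bar>(\<Sum>i<n. eps i * meas n X A i)\<bar> \<le> kap * frob_norm A"
    if A: "A \<in> carrier_mat d d" "symmetric_mat A" "mat_rank A \<le> 2 * r" for A
  proof -
    define Z where "Z = (\<Sum>i<n. eps i * frob_inner (X i) A)"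
    have sn: "sqrt (real n) > 0" using n by simp
    have "(\<Sum>i<n. eps i * meas n X A i) = Z / sqrt (real n)"
      unfolding Z_def meas_def by (simp add: sum_divide_distrib)
    also have "\<dots> = sqrt (real n) * ((1 / real n) * Z)"
      using sn by (simp add: field_simps)
    finally have eq: "(\<Sum>i<n. eps i * meas n X A i) = sqrt (real n) * ((1 / real n) * Z)" .
    have "\<bar>(1 / real n) * Z\<bar> \<le> Cev * sigma * sqrt (real d * real r / real n) * frob_norm A"
      using noise[OF A] unfolding Z_def .
    then have "sqrt (real n) * \<bar>(1 / real n) * Z\<bar> \<le> sqrt (real n) * (Cev * sigma * sqrt (real d * real r / real n) * frob_norm A)"
      using sn by (intro mult_left_mono) auto
    also have "\<dots> = Cev * sigma * (sqrt (real n) * sqrt (real d * real r / real n)) * frob_norm A" by (simp add: algebra_simps)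
    also have "sqrt (real n) * sqrt (real d * real r / real n) = sqrt (real d * real r)"
      using n by (simp add: real_sqrt_mult[symmetric])
    finally show ?thesis unfolding eq kap_def using sn by (simp add: abs_mult)
  qed
  have h4: "\<bar>Seq\<bar> \<le> kap * F" unfolding Seq_def F_def q_def using noise2[OF Qc Qs Qr] .
  have h5: "\<bar>Sea\<bar> \<le> kap * E" unfolding Sea_def E_def a_def using noise2[OF Dlc Dls Dlr] .
  note gi = gram_ineq[OF U Y sym psd]
  define G2 where "G2 = (\<Sum>a<r. \<Sum>b<r. ((\<Sum>i<d. U $$ (i,a) * U $$ (i,b)) - (\<Sum>i<d. Y $$ (i,a) * Y $$ (i,b)))^2)"
  define T where "T = (\<Sum>a<r. (\<Sum>i<d. Y $$ (i,a) * Y $$ (i,a)) - (\<Sum>i<d. U $$ (i,a) * U $$ (i,a)))"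
  have h6: "F^2 + G2 \<le> 2 * E^2"
    using gi(1) unfolding F_def E_def G2_def frob_norm_sq Q_def D_def Dl_def .
  have h7: "T^2 \<le> real r * G2" using gi(2) unfolding T_def G2_def .
  have h8: "frob_inner D D - 4 * frob_inner U D \<le> 2 * T" using gi(3) unfolding T_def D_def .
  have G2pos: "G2 \<ge> 0" unfolding G2_def by (intro sum_nonneg) auto
  have "E \<le> 14 * kap + 12 * lam * sqrt (real r)"
    by (rule final_real[OF main h2 h3 h4 h5 h6 h7 h8])
       (use G2pos sig Cev lam del frob_inner_nonneg in \<open>auto simp: E_def F_def frob_norm_def kap_def\<close>)
  then show ?thesis unfolding MDl E_def kap_def .
qed

lemma factor_exists:
  fixes V Lam :: "real mat"
  assumes V: "V \<in> carrier_mat d r" and L: "Lam \<in> carrier_mat r r" and dg: "diagonal_mat Lam"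
    and pos: "\<forall>i<r. Lam $$ (i,i) > 0"
  shows "\<exists>Y0 \<in> carrier_mat d r. Y0 * transpose_mat Y0 = sqrt (real d) \<cdot>\<^sub>m (V * Lam * transpose_mat V)"
proof -
  define c where "c = sqrt (sqrt (real d))"
  define Y0 where "Y0 = mat d r (\<lambda>(i,k). c * V $$ (i,k) * sqrt (Lam $$ (k,k)))"
  have Y0c: "Y0 \<in> carrier_mat d r" unfolding Y0_def by simp
  have VL: "(V * Lam) $$ (i,k) = V $$ (i,k) * Lam $$ (k,k)" if "i < d" "k < r" for i k
  proof -
    have "(V * Lam) $$ (i,k) = (\<Sum>m<r. V $$ (i,m) * Lam $$ (m,k))" by (rule mult_entry[OF V L that])
    also have "\<dots> = (\<Sum>m<r. if m = k then V $$ (i,k) * Lam $$ (k,k) else 0)"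
      by (intro sum.cong refl) (use dg L that in \<open>auto simp: diagonal_mat_def\<close>)
    also have "\<dots> = V $$ (i,k) * Lam $$ (k,k)" using that by simp
    finally show ?thesis .
  qed
  have VLc: "V * Lam \<in> carrier_mat d r" using V L by auto
  have "Y0 * transpose_mat Y0 = sqrt (real d) \<cdot>\<^sub>m (V * Lam * transpose_mat V)"
  proof (rule eq_matI)
    fix i j assume "i < dim_row (sqrt (real d) \<cdot>\<^sub>m (V * Lam * transpose_mat V))" "j < dim_col (sqrt (real d) \<cdot>\<^sub>m (V * Lam * transpose_mat V))"
    then have ij: "i < d" "j < d" using V L by auto
    have "(Y0 * transpose_mat Y0) $$ (i,j) = (\<Sum>k<r. Y0 $$ (i,k) * Y0 $$ (j,k))" by (rule gram_entry[OF Y0c Y0c ij])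
    also have "\<dots> = (\<Sum>k<r. sqrt (real d) * (V $$ (i,k) * Lam $$ (k,k) * V $$ (j,k)))"
    proof (intro sum.cong refl)
      fix k assume "k \<in> {..<r}"
      then have k: "k < r" by simp
      have "c * c = sqrt (real d)" unfolding c_def by simp
      moreover have "sqrt (Lam $$ (k,k)) * sqrt (Lam $$ (k,k)) = Lam $$ (k,k)" using pos k by (simp add: less_imp_le)
      ultimately show "Y0 $$ (i,k) * Y0 $$ (j,k) = sqrt (real d) * (V $$ (i,k) * Lam $$ (k,k) * V $$ (j,k))"
        unfolding Y0_def using ij k by (simp add: algebra_simps)
    qed
    also have "\<dots> = sqrt (real d) * (V * Lam * transpose_mat V) $$ (i,j)"
      unfolding gram_entry[OF VLc V ij] sum_distrib_left by (intro sum.cong refl) (simp add: VL ij)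
    also have "\<dots> = (sqrt (real d) \<cdot>\<^sub>m (V * Lam * transpose_mat V)) $$ (i,j)" using ij V L by simp
    finally show "(Y0 * transpose_mat Y0) $$ (i,j) = (sqrt (real d) \<cdot>\<^sub>m (V * Lam * transpose_mat V)) $$ (i,j)" .
  qed (use V L Y0c in auto)
  then show ?thesis using Y0c by blast
qed

theorem lemma3:
  fixes kappa cmin C4 C5 Cev :: real
  assumes "kappa > 0" and "cmin > 0" and "C4 > 0" and "C5 > 0" and "Cev > 0"
  shows "\<exists>C1 C3 c0bar :: real. C1 > 0 \<and> C3 > 0 \<and> c0bar > 0 \<and>
    (\<forall>C2 c0 :: real. 0 < c0 \<and> c0 \<le> c0bar \<longrightarrow>
      (\<exists>C :: real. C > 0 \<and>
        (\<forall>(d::nat) (n::nat) (r::nat) (sigma::real) (lam::real) (V::real mat) (Lam::real mat)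
            (X::nat \<Rightarrow> real mat) (eps::nat \<Rightarrow> real) (U::real mat).
          let M = sqrt (real d) \<cdot>\<^sub>m (V * Lam * transpose_mat V);
              lam_r = Min {Lam $$ (i,i) | i. i < r};
              delta = c0 / sqrt (real r)
          in
          d > 0 \<and> n > 0 \<and> r > 0 \<and>
          \<comment> \<open>Assumption 1\<close>
          V \<in> carrier_mat d r \<and> transpose_mat V * V = 1\<^sub>m r \<and>
          Lam \<in> carrier_mat r r \<and> diagonal_mat Lam \<and> (\<forall>i<r. Lam $$ (i,i) > 0) \<and>
          C1 * sqrt (real r) < lam_r / sigma \<and> lam_r / sigma < C2 * sqrt (real r) \<and>
          spec_norm M / (lam_r * sqrt (real d)) \<le> kappa \<and>
          sigma \<ge> cmin \<and>
          \<comment> \<open>Assumption 2\<close>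
          real n / (real d * real r) \<ge> C3 * real r \<and>
          \<comment> \<open>Assumption 3\<close>
          C4 * sqrt (real d) \<le> lam / sigma \<and> lam / sigma \<le> C5 * sqrt (real d) \<and>
          \<comment> \<open>design: symmetric d x d sensing matrices\<close>
          (\<forall>i<n. X i \<in> carrier_mat d d \<and> symmetric_mat (X i)) \<and>
          \<comment> \<open>on the event E_Good\<close>
          good_event d n r sigma delta Cev X eps \<and>
          \<comment> \<open>U satisfies first- and second-order necessary conditions\<close>
          second_order_stationary (f_obj n X eps M lam) d r U
          \<longrightarrow>
          frob_norm (U * transpose_mat U - M) / sqrt (real d * real r) \<le> C * sigma \<and>
          frob_norm (U * transpose_mat U - M) < lam / (2 * delta))))"
proof -
  define K where "K = 14 * Cev + 12 * C5"
  have Kpos: "K > 0" unfolding K_def using assms by simp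
  define c0bar where "c0bar = min (1/10) (C4 / (4 * K))"
  have c0barpos: "c0bar > 0" unfolding c0bar_def using Kpos assms by simp
  have main: "\<exists>C :: real. C > 0 \<and>
        (\<forall>(d::nat) (n::nat) (r::nat) (sigma::real) (lam::real) (V::real mat) (Lam::real mat)
            (X::nat \<Rightarrow> real mat) (eps::nat \<Rightarrow> real) (U::real mat).
          let M = sqrt (real d) \<cdot>\<^sub>m (V * Lam * transpose_mat V);
              lam_r = Min {Lam $$ (i,i) | i. i < r};
              delta = c0 / sqrt (real r)
          in
          d > 0 \<and> n > 0 \<and> r > 0 \<and>
          V \<in> carrier_mat d r \<and> transpose_mat V * V = 1\<^sub>m r \<and>
          Lam \<in> carrier_mat r r \<and> diagonal_mat Lam \<and> (\<forall>i<r. Lam $$ (i,i) > 0) \<and>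
          C1 * sqrt (real r) < lam_r / sigma \<and> lam_r / sigma < C2 * sqrt (real r) \<and>
          spec_norm M / (lam_r * sqrt (real d)) \<le> kappa \<and>
          sigma \<ge> cmin \<and>
          real n / (real d * real r) \<ge> C3 * real r \<and>
          C4 * sqrt (real d) \<le> lam / sigma \<and> lam / sigma \<le> C5 * sqrt (real d) \<and>
          (\<forall>i<n. X i \<in> carrier_mat d d \<and> symmetric_mat (X i)) \<and>
          good_event d n r sigma delta Cev X eps \<and>
          second_order_stationary (f_obj n X eps M lam) d r U
          \<longrightarrow>
          frob_norm (U * transpose_mat U - M) / sqrt (real d * real r) \<le> C * sigma \<and>
          frob_norm (U * transpose_mat U - M) < lam / (2 * delta))"
    if c0: "0 < c0" "c0 \<le> c0bar" for C1 C2 C3 c0 :: real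
  proof (intro exI[of _ K] conjI allI impI)
    show "K > 0" by (rule Kpos)
    fix d n r :: nat and sigma lam :: real and V Lam :: "real mat" and X :: "nat \<Rightarrow> real mat" and eps :: "nat \<Rightarrow> real"
      and U :: "real mat"
    define M where "M = sqrt (real d) \<cdot>\<^sub>m (V * Lam * transpose_mat V)"
    define delta where "delta = c0 / sqrt (real r)"
    show "let M = sqrt (real d) \<cdot>\<^sub>m (V * Lam * transpose_mat V);
              lam_r = Min {Lam $$ (i,i) | i. i < r};
              delta = c0 / sqrt (real r)
          in
          d > 0 \<and> n > 0 \<and> r > 0 \<and>
          V \<in> carrier_mat d r \<and> transpose_mat V * V = 1\<^sub>m r \<and>
          Lam \<in> carrier_mat r r \<and> diagonal_mat Lam \<and> (\<forall>i<r. Lam $$ (i,i) > 0) \<and>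
          C1 * sqrt (real r) < lam_r / sigma \<and> lam_r / sigma < C2 * sqrt (real r) \<and>
          spec_norm M / (lam_r * sqrt (real d)) \<le> kappa \<and>
          sigma \<ge> cmin \<and>
          real n / (real d * real r) \<ge> C3 * real r \<and>
          C4 * sqrt (real d) \<le> lam / sigma \<and> lam / sigma \<le> C5 * sqrt (real d) \<and>
          (\<forall>i<n. X i \<in> carrier_mat d d \<and> symmetric_mat (X i)) \<and>
          good_event d n r sigma delta Cev X eps \<and>
          second_order_stationary (f_obj n X eps M lam) d r U
          \<longrightarrow>
          frob_norm (U * transpose_mat U - M) / sqrt (real d * real r) \<le> K * sigma \<and>
          frob_norm (U * transpose_mat U - M) < lam / (2 * delta)"
      unfolding Let_def M_def[symmetric] delta_def[symmetric]
    proof (intro impI)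
      assume H: "d > 0 \<and> n > 0 \<and> r > 0 \<and>
          V \<in> carrier_mat d r \<and> transpose_mat V * V = 1\<^sub>m r \<and>
          Lam \<in> carrier_mat r r \<and> diagonal_mat Lam \<and> (\<forall>i<r. Lam $$ (i,i) > 0) \<and>
          C1 * sqrt (real r) < Min {Lam $$ (i,i) | i. i < r} / sigma \<and> Min {Lam $$ (i,i) | i. i < r} / sigma < C2 * sqrt (real r) \<and>
          spec_norm M / (Min {Lam $$ (i,i) | i. i < r} * sqrt (real d)) \<le> kappa \<and>
          sigma \<ge> cmin \<and>
          real n / (real d * real r) \<ge> C3 * real r \<and>
          C4 * sqrt (real d) \<le> lam / sigma \<and> lam / sigma \<le> C5 * sqrt (real d) \<and>
          (\<forall>i<n. X i \<in> carrier_mat d d \<and> symmetric_mat (X i)) \<and>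
          good_event d n r sigma delta Cev X eps \<and>
          second_order_stationary (f_obj n X eps M lam) d r U"
      have d: "d > 0" and n: "n > 0" and r: "r > 0" using H by auto
      have V: "V \<in> carrier_mat d r" and Lc: "Lam \<in> carrier_mat r r" and dg: "diagonal_mat Lam"
        and Lpos: "\<forall>i<r. Lam $$ (i,i) > 0" using H by auto
      have sig: "sigma \<ge> cmin" and lam1: "C4 * sqrt (real d) \<le> lam / sigma" and lam2: "lam / sigma \<le> C5 * sqrt (real d)"
        using H by auto
      have Xc: "\<forall>i<n. X i \<in> carrier_mat d d" using H by auto
      have good: "good_event d n r sigma delta Cev X eps" using H by auto
      have sos: "second_order_stationary (f_obj n X eps M lam) d r U" using H by auto
      have sigpos: "sigma > 0" using sig assms by linarith
      have U: "U \<in> carrier_mat d r" using sos unfolding second_order_stationary_def by auto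
      have sr: "sqrt (real r) \<ge> 1" using r by simp
      have del0: "0 \<le> delta" unfolding delta_def using c0 by simp
      have "delta \<le> c0" unfolding delta_def using c0 sr by (simp add: divide_le_eq)
      then have del1: "delta \<le> 1/10" using c0 unfolding c0bar_def by simp
      have lamlo: "lam \<ge> C4 * sqrt (real d) * sigma" using lam1 sigpos by (simp add: pos_le_divide_eq)
      have lamhi: "lam \<le> C5 * sqrt (real d) * sigma" using lam2 sigpos by (simp add: pos_divide_le_eq)
      have lam0: "lam \<ge> 0" using lamlo assms sigpos by (smt (verit) mult_nonneg_nonneg real_sqrt_ge_zero of_nat_0_le_iff)
      obtain Y0 where Y0: "Y0 \<in> carrier_mat d r" and Y0M: "Y0 * transpose_mat Y0 = M"
        using factor_exists[OF V Lc dg Lpos] unfolding M_def by blast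
      obtain Y where Y: "Y \<in> carrier_mat d r" and YM: "Y * transpose_mat Y = M"
        and mx: "\<forall>Y' \<in> carrier_mat d r. Y' * transpose_mat Y' = M \<longrightarrow> frob_inner U Y' \<le> frob_inner U Y"
        using exists_max[OF U Y0 Y0M] by blast
      note sp = max_sym_psd[OF U Y YM mx]
      have bound: "frob_norm (U * transpose_mat U - M) \<le> 14 * (Cev * sigma * sqrt (real d * real r)) + 12 * lam * sqrt (real r)"
        by (rule landscape[OF Xc sos Y YM sp(2) sp(1) good n del0 del1 lam0]) (use sigpos assms in auto)
      define E where "E = frob_norm (U * transpose_mat U - M)"
      have sdr: "sqrt (real d * real r) = sqrt (real d) * sqrt (real r)" by (simp add: real_sqrt_mult)
      have "12 * lam * sqrt (real r) \<le> 12 * (C5 * sqrt (real d) * sigma) * sqrt (real r)"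
        using lamhi by (intro mult_right_mono) auto
      then have EK: "E \<le> K * (sigma * sqrt (real d * real r))"
        using bound unfolding E_def K_def sdr by (simp add: algebra_simps)
      have pos: "sigma * sqrt (real d * real r) > 0" using sigpos d r by simp
      show "frob_norm (U * transpose_mat U - M) / sqrt (real d * real r) \<le> K * sigma \<and>
          frob_norm (U * transpose_mat U - M) < lam / (2 * delta)"
      proof
        have "sqrt (real d * real r) > 0" using d r by simp
        then show "frob_norm (U * transpose_mat U - M) / sqrt (real d * real r) \<le> K * sigma"
          using EK unfolding E_def by (simp add: divide_le_eq algebra_simps)
      next
        have "c0 \<le> C4 / (4 * K)" using c0 unfolding c0bar_def by simp
        then have "4 * K * c0 \<le> C4" using Kpos by (simp add: le_divide_eq algebra_simps)
        moreover have "K * c0 > 0" using Kpos c0 by simp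
        moreover have "2 * c0 * K = 2 * (K * c0)" "4 * K * c0 = 4 * (K * c0)" by simp_all
        ultimately have "2 * c0 * K < C4" by linarith
        then have "K < C4 / (2 * c0)" using c0 by (simp add: less_divide_eq algebra_simps)
        then have "K * (sigma * sqrt (real d * real r)) < C4 / (2 * c0) * (sigma * sqrt (real d * real r))"
          using pos by (intro mult_strict_right_mono) auto
        also have "\<dots> = (C4 * sqrt (real d) * sigma) * sqrt (real r) / (2 * c0)"
          unfolding sdr by (simp add: field_simps)
        also have "\<dots> \<le> lam * sqrt (real r) / (2 * c0)"
          using lamlo c0 by (intro divide_right_mono mult_right_mono) auto
        also have "\<dots> = lam / (2 * delta)"
          unfolding delta_def using sr by (simp add: field_simps)
        finally show "frob_norm (U * transpose_mat U - M) < lam / (2 * delta)"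
          using EK unfolding E_def by linarith
      qed
    qed
  qed
  show ?thesis
    apply (rule exI[of _ 1], rule exI[of _ 1], rule exI[of _ c0bar])
    apply (intro conjI)
       apply simp
      apply simp
     apply (rule c0barpos)
    apply (intro allI impI)
    apply (erule conjE)
    apply (rule main)
     apply assumption+
    done
qed

end
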